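(* Let $c\in(0,1)$, $\delta>0$, and let $F$ be the distribution function on $[0,1]$ \[ F(x)=\begin{cases} c\,2^\delta x^\delta, & x\in[0,1/2],\\ 1-(1-c)\,2^\delta(1-x)^\delta, & x\in[1/2,1].\end{cases} \] Let $X_1,X_2,\dots$ be i.i.d. with distribution function $F$. Define $(Z_0,r_0)=(0,1)$ and, recursively, $K_n=[Z_n-r_n,Z_n+r_n]$, $p_{n+1}=2r_nX_{n+1}+Z_n-r_n$, $K_{n+1}=K_n\cap[p_{n+1}-1,p_{n+1}+1]$, with $Z_{n+1},r_{n+1}$ the center and half-length of $K_{n+1}$. Then $Z_n$ converges almost surely to a random variable $Z$ whose law has density \[ f_{\delta,c}(x)=\frac{\Gamma(\delta)}{\Gamma(\delta(1-c))\,\Gamma(\delta c)}\,\Big(\tfrac12+x\Big)^{\delta(1-c)-1}\Big(\tfrac12-x\Big)^{\delta c-1},\quad x\in(-1/2,1/2), \] i.e. $Z+1/2$ has the beta$(\delta(1-c),\delta c)$ distribution.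
   Context: $X_{n+1}$ is independent of $(Z_k,r_k)_{k\le n}$. For $\alpha,\beta>0$, the beta$(\alpha,\beta)$ law has density $x^{\alpha-1}(1-x)^{\beta-1}/B(\alpha,\beta)$ on $(0,1)$, with $B(\alpha,\beta)=\Gamma(\alpha)\Gamma(\beta)/\Gamma(\alpha+\beta)$. *)

theory Defs
  imports "HOL-Probability.Probability"
begin

definition Fdist :: "real \<Rightarrow> real \<Rightarrow> real \<Rightarrow> real" where
  "Fdist c \<delta> x =
     (if x < 0 then 0
      else if x \<le> 1/2 then c * 2 powr \<delta> * x powr \<delta>
      else if x \<le> 1 then 1 - (1 - c) * 2 powr \<delta> * (1 - x) powr \<delta>
      else 1)"

definition step :: "real \<times> real \<Rightarrow> real \<Rightarrow> real \<times> real" where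
  "step zr x = (let z = fst zr; r = snd zr; p = 2 * r * x + z - r;
                    lo = max (z - r) (p - 1); hi = min (z + r) (p + 1)
                in ((lo + hi) / 2, (hi - lo) / 2))"

text \<open>(Z_n, r_n) driven by the sequence xs, where xs (Suc n) is X_{n+1}.\<close>
fun Zr :: "(nat \<Rightarrow> real) \<Rightarrow> nat \<Rightarrow> real \<times> real" where
  "Zr xs 0 = (0, 1)"
| "Zr xs (Suc n) = step (Zr xs n) (xs (Suc n))"

definition f_dens :: "real \<Rightarrow> real \<Rightarrow> real \<Rightarrow> real" where
  "f_dens \<delta> c x =
     (if -1/2 < x \<and> x < 1/2 then
        Gamma \<delta> / (Gamma (\<delta> * (1 - c)) * Gamma (\<delta> * c))
        * (1/2 + x) powr (\<delta> * (1 - c) - 1) * (1/2 - x) powr (\<delta> * c - 1)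
      else 0)"

end

theory Submission
  imports Defs
begin


definition al :: "real \<times> real \<Rightarrow> real" where "al zr = fst zr - snd zr + 1"
definition uu :: "real \<times> real \<Rightarrow> real" where "uu zr = 2 * snd zr - 1"
definition valid :: "real \<times> real \<Rightarrow> bool" where "valid zr \<longleftrightarrow> 1/2 \<le> snd zr \<and> snd zr \<le> 1"

lemma fst_al_uu: "fst zr = al zr + uu zr / 2 - 1/2"
  by (simp add: al_def uu_def field_simps)

lemma step_cut1:
  assumes "valid zr" "0 \<le> x" "2 * snd zr * x < uu zr"
  shows "al (step zr x) = al zr" "uu (step zr x) = 2 * snd zr * x"
proof -
  obtain z r where zr: "zr = (z,r)" by (cases zr)
  have h: "2*r*x < 2*r - 1" "1/2 \<le> r" "r \<le> 1" using assms by (auto simp: zr uu_def valid_def)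
  have "max (z - r) (2*r*x + z - r - 1) = z - r" using h by auto
  moreover have "min (z + r) (2*r*x + z - r + 1) = 2*r*x + z - r + 1" using h by auto
  ultimately show "al (step zr x) = al zr" "uu (step zr x) = 2 * snd zr * x"
    by (auto simp: zr step_def al_def uu_def Let_def field_simps)
qed

lemma step_cut2:
  assumes "valid zr" "x \<le> 1" "2 * snd zr * x > 1"
  shows "al (step zr x) = al zr + 2 * snd zr * x - 1" "uu (step zr x) = 2 * snd zr - 2 * snd zr * x"
proof -
  obtain z r where zr: "zr = (z,r)" by (cases zr)
  have h: "2*r*x > 1" "1/2 \<le> r" "r \<le> 1" "x \<le> 1" using assms by (auto simp: zr uu_def valid_def)
  have "max (z - r) (2*r*x + z - r - 1) = 2*r*x + z - r - 1" using h by auto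
  moreover have "min (z + r) (2*r*x + z - r + 1) = z + r" using h by auto
  ultimately show "al (step zr x) = al zr + 2 * snd zr * x - 1" "uu (step zr x) = 2 * snd zr - 2 * snd zr * x"
    by (auto simp: zr step_def al_def uu_def Let_def field_simps)
qed

lemma step_mid:
  assumes "valid zr" "uu zr \<le> 2 * snd zr * x" "2 * snd zr * x \<le> 1"
  shows "step zr x = zr"
proof -
  obtain z r where zr: "zr = (z,r)" by (cases zr)
  have h: "2*r*x \<ge> 2*r - 1" "2*r*x \<le> 1" using assms by (auto simp: zr uu_def valid_def)
  have "max (z - r) (2*r*x + z - r - 1) = z - r" using h by auto
  moreover have "min (z + r) (2*r*x + z - r + 1) = z + r" using h by auto
  ultimately show ?thesis
    by (auto simp: zr step_def Let_def field_simps)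
qed

lemma valid_iff: "valid zr \<longleftrightarrow> 0 \<le> uu zr \<and> uu zr \<le> 1"
  by (auto simp: valid_def uu_def)

lemma step_props:
  assumes "valid zr" "0 \<le> x" "x \<le> 1"
  shows "valid (step zr x)" "al zr \<le> al (step zr x)"
    "al (step zr x) + uu (step zr x) \<le> al zr + uu zr" "uu (step zr x) \<le> uu zr"
proof -
  have r: "1/2 \<le> snd zr" "snd zr \<le> 1" using assms(1) by (auto simp: valid_def)
  have u: "uu zr = 2 * snd zr - 1" by (simp add: uu_def)
  consider "2 * snd zr * x < uu zr" | "2 * snd zr * x > 1" | "uu zr \<le> 2 * snd zr * x \<and> 2 * snd zr * x \<le> 1"
    by linarith
  then have "valid (step zr x) \<and> al zr \<le> al (step zr x) \<and>
    al (step zr x) + uu (step zr x) \<le> al zr + uu zr \<and> uu (step zr x) \<le> uu zr"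
  proof cases
    case 1
    have "0 \<le> 2 * snd zr * x" using r assms by simp
    with 1 show ?thesis using step_cut1[OF assms(1,2) 1] assms u r by (auto simp: valid_iff)
  next
    case 2
    have "2 * snd zr * x \<le> 2 * snd zr" using r assms by simp
    with 2 show ?thesis using step_cut2[OF assms(1,3) 2] assms u r by (auto simp: valid_iff)
  next
    case 3 then show ?thesis using step_mid[of zr x] assms by auto
  qed
  then show "valid (step zr x)" "al zr \<le> al (step zr x)"
    "al (step zr x) + uu (step zr x) \<le> al zr + uu zr" "uu (step zr x) \<le> uu zr" by auto
qed

lemma Zr_props:
  assumes "\<And>k. 1 \<le> k \<Longrightarrow> 0 \<le> xs k \<and> xs k \<le> 1"
  shows "valid (Zr xs n)" "incseq (\<lambda>n. al (Zr xs n))" "decseq (\<lambda>n. uu (Zr xs n))"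
    "decseq (\<lambda>n. al (Zr xs n) + uu (Zr xs n))"
proof -
  have v: "valid (Zr xs n)" for n
  proof (induction n)
    case (Suc n) then show ?case using step_props(1)[OF Suc, of "xs (Suc n)"] assms[of "Suc n"] by simp
  qed (auto simp: valid_def)
  then show "valid (Zr xs n)" .
  show "incseq (\<lambda>n. al (Zr xs n))"
    by (rule incseq_SucI) (use step_props v assms in auto)
  show "decseq (\<lambda>n. uu (Zr xs n))"
    by (rule decseq_SucI) (use step_props v assms in auto)
  show "decseq (\<lambda>n. al (Zr xs n) + uu (Zr xs n))"
    by (rule decseq_SucI) (use step_props v assms in auto)
qed

lemma Zr_cong: "(\<And>k. 1 \<le> k \<Longrightarrow> k \<le> n \<Longrightarrow> xs k = ys k) \<Longrightarrow> Zr xs n = Zr ys n"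
  by (induction n) auto

lemma measurable_step[measurable]:
  assumes f: "f \<in> borel_measurable M" and g[measurable]: "g \<in> borel_measurable M"
  shows "(\<lambda>\<omega>. step (f \<omega>) (g \<omega>) :: real \<times> real) \<in> borel_measurable M"
proof -
  have f'[measurable]: "f \<in> M \<rightarrow>\<^sub>M borel \<Otimes>\<^sub>M borel" using f by (simp add: borel_prod)
  have "(\<lambda>\<omega>. step (f \<omega>) (g \<omega>)) \<in> M \<rightarrow>\<^sub>M borel \<Otimes>\<^sub>M borel"
    unfolding step_def Let_def by measurable
  then show ?thesis by (simp add: borel_prod)
qed

locale params =
  fixes c \<delta> :: real
  assumes c0: "0 < c" and c1: "c < 1" and d0: "0 < \<delta>"




locale setting = prob_space M + params c \<delta> for M :: "'a measure" and c \<delta> :: real +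
  fixes X :: "nat \<Rightarrow> 'a \<Rightarrow> real"
  assumes Xmeas: "\<And>n. n \<ge> 1 \<Longrightarrow> X n \<in> borel_measurable M"
    and Xind: "indep_vars (\<lambda>_. borel) X {1..}"
    and Xcdf: "\<And>n t. n \<ge> 1 \<Longrightarrow> measure M {\<omega> \<in> space M. X n \<omega> \<le> t} = Fdist c \<delta> t"
begin

definition Y :: "nat \<Rightarrow> 'a \<Rightarrow> real \<times> real" where "Y n \<omega> = Zr (\<lambda>k. X k \<omega>) n"

lemma XSuc_meas[measurable]: "X (Suc n) \<in> borel_measurable M"
  using Xmeas[of "Suc n"] by simp

lemma Y_0: "Y 0 \<omega> = (0,1)" by (simp add: Y_def)
lemma Y_Suc: "Y (Suc n) \<omega> = step (Y n \<omega>) (X (Suc n) \<omega>)" by (simp add: Y_def)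

lemma Y_meas[measurable]: "Y n \<in> borel_measurable M"
proof (induction n)
  case 0 then show ?case by (simp add: Y_0)
next
  case (Suc n)
  have "(\<lambda>\<omega>. step (Y n \<omega>) (X (Suc n) \<omega>)) \<in> borel_measurable M"
    using Suc by measurable
  then show ?case by (simp add: Y_Suc[abs_def])
qed

lemma Zr_PiM_meas: "m \<le> n \<Longrightarrow> (\<lambda>f. Zr f m) \<in> PiM {1..n} (\<lambda>_. borel) \<rightarrow>\<^sub>M borel"
proof (induction m)
  case 0 then show ?case by simp
next
  case (Suc m)
  have f: "(\<lambda>f. f (Suc m)) \<in> PiM {1..n} (\<lambda>_. borel) \<rightarrow>\<^sub>M (borel :: real measure)"
    using Suc.prems by (intro measurable_component_singleton) auto
  have "(\<lambda>f. step (Zr f m) (f (Suc m))) \<in> PiM {1..n} (\<lambda>_. borel) \<rightarrow>\<^sub>M borel"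
    using Suc f by (intro measurable_step) auto
  then show ?case by simp
qed

lemma indep_YX: "indep_var borel (Y n) borel (\<lambda>\<omega>. (X (Suc n) \<omega>, 0::real))"
proof -
  have "indep_var (PiM {1..n} (\<lambda>_. borel)) (\<lambda>\<omega>. restrict (\<lambda>i. X i \<omega>) {1..n})
      (PiM {Suc n} (\<lambda>_. borel)) (\<lambda>\<omega>. restrict (\<lambda>i. X i \<omega>) {Suc n})"
    by (rule indep_var_restrict[OF Xind]) auto
  moreover have m2: "(\<lambda>f. (f (Suc n), 0::real)) \<in> PiM {Suc n} (\<lambda>_. borel) \<rightarrow>\<^sub>M (borel :: (real \<times> real) measure)"
  proof -
    have "(\<lambda>f. f (Suc n)) \<in> PiM {Suc n} (\<lambda>_. borel) \<rightarrow>\<^sub>M (borel :: real measure)"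
      by (rule measurable_component_singleton) simp
    then have "(\<lambda>f. (f (Suc n), 0::real)) \<in> PiM {Suc n} (\<lambda>_. borel) \<rightarrow>\<^sub>M (borel \<Otimes>\<^sub>M borel)"
      by measurable
    then show ?thesis by (simp add: borel_prod)
  qed
  ultimately have "indep_var borel ((\<lambda>f. Zr f n) \<circ> (\<lambda>\<omega>. restrict (\<lambda>i. X i \<omega>) {1..n}))
     borel ((\<lambda>f. (f (Suc n), 0::real)) \<circ> (\<lambda>\<omega>. restrict (\<lambda>i. X i \<omega>) {Suc n}))"
    using indep_var_compose[OF _ Zr_PiM_meas[OF order_refl]] by blast
  moreover have "(\<lambda>f. Zr f n) \<circ> (\<lambda>\<omega>. restrict (\<lambda>i. X i \<omega>) {1..n}) = Y n"
    by (auto simp: fun_eq_iff Y_def intro!: Zr_cong)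
  moreover have "(\<lambda>f. (f (Suc n), 0::real)) \<circ> (\<lambda>\<omega>. restrict (\<lambda>i. X i \<omega>) {Suc n}) = (\<lambda>\<omega>. (X (Suc n) \<omega>, 0))"
    by (auto simp: fun_eq_iff)
  ultimately show ?thesis by simp
qed

definition PX :: "real measure" where "PX = distr M borel (X 1)"

lemma real_distr_X: "n \<ge> 1 \<Longrightarrow> real_distribution (distr M borel (X n))"
  using Xmeas by (auto simp: real_distribution_def real_distribution_axioms_def intro!: prob_space_distr)

lemma distr_X: assumes n: "n \<ge> 1" shows "distr M borel (X n) = PX"
  unfolding PX_def
proof (rule cdf_unique[OF real_distr_X[OF n] real_distr_X])
  show "cdf (distr M borel (X n)) = cdf (distr M borel (X 1))"
  proof
    fix t
    have "cdf (distr M borel (X m)) t = Fdist c \<delta> t" if "m \<ge> 1" for m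
      using that Xmeas[OF that] Xcdf[OF that, of t]
      by (simp add: cdf_def measure_distr vimage_def Int_def conj_commute)
    then show "cdf (distr M borel (X n)) t = cdf (distr M borel (X 1)) t" using n by simp
  qed
qed (rule order_refl)

lemma PX_real_distr: "real_distribution PX"
  unfolding PX_def by (rule real_distr_X) simp

lemma sets_PX[measurable_cong]: "sets PX = sets borel" by (simp add: PX_def)

lemma K_lemma:
  assumes f[measurable]: "case_prod f \<in> borel_measurable (borel \<Otimes>\<^sub>M borel)"
  shows "(\<integral>\<^sup>+\<omega>. f (Y n \<omega>) (X (Suc n) \<omega>) \<partial>M) = (\<integral>\<^sup>+\<omega>. (\<integral>\<^sup>+x. f (Y n \<omega>) x \<partial>PX) \<partial>M)"
proof -
  let ?PY = "distr M borel (Y n)"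
  let ?Q = "distr M borel (\<lambda>\<omega>. (X (Suc n) \<omega>, 0::real))"
  have PXn: "distr M borel (X (Suc n)) = PX" by (rule distr_X) simp
  have Xp[measurable]: "(\<lambda>\<omega>. (X (Suc n) \<omega>, 0::real)) \<in> borel_measurable M"
    unfolding borel_prod[symmetric] by measurable
  have Q: "?Q = distr PX borel (\<lambda>x. (x, 0::real))"
    unfolding PXn[symmetric]
    by (subst distr_distr) (auto simp: comp_def borel_prod[symmetric])
  have eq: "?PY \<Otimes>\<^sub>M ?Q = distr M (borel \<Otimes>\<^sub>M borel) (\<lambda>\<omega>. (Y n \<omega>, (X (Suc n) \<omega>, 0)))"
    using indep_YX[of n] unfolding indep_var_distribution_eq by simp
  interpret PY: prob_space ?PY by (rule prob_space_distr) simp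
  interpret Qp: prob_space ?Q by (rule prob_space_distr) simp
  interpret PXp: prob_space PX using PX_real_distr by (simp add: real_distribution_def)
  interpret pair_sigma_finite ?PY ?Q ..
  let ?g = "\<lambda>(y::real\<times>real, q::real\<times>real). f y (fst q)"
  have g[measurable]: "?g \<in> borel_measurable (borel \<Otimes>\<^sub>M borel)"
  proof -
    have "(\<lambda>p::(real\<times>real)\<times>(real\<times>real). (fst p, fst (snd p))) \<in> (borel \<Otimes>\<^sub>M borel) \<rightarrow>\<^sub>M (borel \<Otimes>\<^sub>M borel)"
      unfolding borel_prod[symmetric] by measurable
    from measurable_compose[OF this f] show ?thesis by (simp add: case_prod_beta)
  qed
  have g'[measurable]: "?g \<in> borel_measurable borel" using g by (simp add: borel_prod)
  have "(\<integral>\<^sup>+\<omega>. f (Y n \<omega>) (X (Suc n) \<omega>) \<partial>M) =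
      (\<integral>\<^sup>+p. ?g p \<partial>distr M (borel \<Otimes>\<^sub>M borel) (\<lambda>\<omega>. (Y n \<omega>, (X (Suc n) \<omega>, 0))))"
    by (subst nn_integral_distr) (auto simp: borel_prod)
  also have "\<dots> = (\<integral>\<^sup>+p. ?g p \<partial>(?PY \<Otimes>\<^sub>M ?Q))" by (simp add: eq)
  also have "\<dots> = (\<integral>\<^sup>+y. \<integral>\<^sup>+q. f y (fst q) \<partial>?Q \<partial>?PY)"
  proof -
    have "?g \<in> borel_measurable (?PY \<Otimes>\<^sub>M ?Q)"
      using g by (subst measurable_cong_sets[OF sets_pair_measure_cong[OF sets_distr sets_distr] refl]) simp
    from Qp.nn_integral_fst[OF this] show ?thesis by simp
  qed
  also have "\<dots> = (\<integral>\<^sup>+y. \<integral>\<^sup>+x. f y x \<partial>PX \<partial>?PY)"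
  proof (intro nn_integral_cong)
    fix y :: "real \<times> real"
    show "(\<integral>\<^sup>+q. f y (fst q) \<partial>?Q) = (\<integral>\<^sup>+x. f y x \<partial>PX)"
      unfolding Q by (subst nn_integral_distr) (auto simp: sets_PX cong: measurable_cong_sets)
  qed
  also have "\<dots> = (\<integral>\<^sup>+\<omega>. (\<integral>\<^sup>+x. f (Y n \<omega>) x \<partial>PX) \<partial>M)"
  proof -
    have hm: "(\<lambda>y. \<integral>\<^sup>+ x. f y x \<partial>PX) \<in> borel_measurable borel"
      by (rule PXp.borel_measurable_nn_integral) (simp add: sets_PX cong: measurable_cong_sets)
    show ?thesis using hm by (subst nn_integral_distr) auto
  qed
  finally show ?thesis .
qed

end



context params
begin

definition aa where "aa = \<delta> * (1 - c)"
definition bb where "bb = \<delta> * c"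
lemma aa_pos: "0 < aa" and bb_pos: "0 < bb" and aa_bb: "aa + bb = \<delta>"
  using c0 c1 d0 by (auto simp: aa_def bb_def algebra_simps)

definition gB :: "real \<Rightarrow> real" where "gB w = f_dens \<delta> c (w - 1/2)"

lemma Beta_pos: "Beta aa bb > 0"
  using aa_pos bb_pos by (simp add: Beta_def)

lemma gB_eq: "0 < w \<Longrightarrow> w < 1 \<Longrightarrow> gB w = w powr (aa - 1) * (1 - w) powr (bb - 1) / Beta aa bb"
proof -
  assume w: "0 < w" "w < 1"
  have e: "1/2 - (w - 1/2) = 1 - w" "1/2 + (w - 1/2) = w" by simp_all
  show ?thesis
    unfolding gB_def f_dens_def Beta_def using aa_bb w
    by (simp only: e) (simp add: aa_def bb_def field_simps)
qed

lemma gB_out: "w \<le> 0 \<or> 1 \<le> w \<Longrightarrow> gB w = 0"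
  unfolding gB_def f_dens_def by auto

lemma gB_nonneg: "0 \<le> gB w"
proof (cases "0 < w \<and> w < 1")
  case True then show ?thesis using Beta_pos by (simp add: gB_eq)
qed (auto simp: gB_out)

lemma gB_meas[measurable]: "gB \<in> borel_measurable borel"
  unfolding gB_def f_dens_def by measurable

lemma gB_eq': "gB w = indicator {0..1} w * (w powr (aa - 1) * (1 - w) powr (bb - 1)) / Beta aa bb"
proof -
  consider "0 < w \<and> w < 1" | "w = 0" | "w = 1" | "w < 0 \<or> w > 1" by linarith
  then show ?thesis by cases (auto simp: gB_eq gB_out)
qed

definition beta :: "real measure" where "beta = density lborel (\<lambda>w. ennreal (gB w))"

lemma sets_beta[measurable_cong]: "sets beta = sets borel" by (simp add: beta_def)
lemma space_beta[simp]: "space beta = UNIV" by (simp add: beta_def)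

lemma nn_integral_gB: "(\<integral>\<^sup>+w. ennreal (gB w) \<partial>lborel) = 1"
proof -
  have "(\<integral>\<^sup>+w. ennreal (gB w) \<partial>lborel) =
      (\<integral>\<^sup>+w. ennreal (indicator {0..1} w * (w powr (aa - 1) * (1 - w) powr (bb - 1))) * ennreal (1 / Beta aa bb) \<partial>lborel)"
    using Beta_pos by (intro nn_integral_cong) (auto simp: gB_eq' ennreal_mult'[symmetric] indicator_def)
  also have "\<dots> = (\<integral>\<^sup>+w. ennreal (indicator {0..1} w * (w powr (aa - 1) * (1 - w) powr (bb - 1))) \<partial>lborel) * ennreal (1 / Beta aa bb)"
    by (rule nn_integral_multc) measurable
  also have "(\<integral>\<^sup>+w. ennreal (indicator {0..1} w * (w powr (aa - 1) * (1 - w) powr (bb - 1))) \<partial>lborel) = ennreal (Beta aa bb)"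
    by (rule nn_integral_has_integral_lebesgue[OF _ has_integral_Beta_real[OF aa_pos bb_pos]]) auto
  finally show ?thesis using Beta_pos by (simp add: ennreal_mult'[symmetric])
qed

lemma prob_beta: "prob_space beta"
  by (rule prob_spaceI) (simp add: beta_def emeasure_density_const nn_integral_gB emeasure_density)

lemma AE_beta: "AE w in beta. 0 < w \<and> w < 1"
  unfolding beta_def
proof (subst AE_density)
  show "AE x in lborel. 0 < ennreal (gB x) \<longrightarrow> 0 < x \<and> x < 1"
  proof (intro AE_I2 impI)
    fix x assume "0 < ennreal (gB x)"
    then have "gB x \<noteq> 0" by auto
    then show "0 < x \<and> x < 1" using gB_out[of x] by (metis not_less)
  qed
qed simp

lemma beta_singleton: "measure beta {w} = 0"
proof -
  have "emeasure beta {w} = 0" unfolding beta_def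
    by (subst emeasure_density) (auto intro!: nn_integral_null_set simp: )
  then show ?thesis by (simp add: measure_def)
qed

end

lemma ftc_lebesgue:
  fixes G g :: "real \<Rightarrow> real"
  assumes ab: "a \<le> b" and cont: "continuous_on {a..b} G"
    and der: "\<And>x. x \<in> {a<..<b} \<Longrightarrow> (G has_real_derivative g x) (at x)"
    and nn: "\<And>x. x \<in> {a..b} \<Longrightarrow> 0 \<le> g x"
    and meas: "g \<in> borel_measurable borel"
  shows "integral\<^sup>L lborel (\<lambda>x. indicator {a..b} x * g x) = G b - G a"
proof -
  have hi: "(g has_integral (G b - G a)) {a..b}"
    using fundamental_theorem_of_calculus_interior[OF ab cont] der
    by (simp add: has_real_derivative_iff_has_vector_derivative)
  have nn': "(\<integral>\<^sup>+x. ennreal (indicator {a..b} x * g x) \<partial>lborel) = ennreal (G b - G a)"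
    using nn_integral_has_integral_lebesgue[OF nn hi] by simp
  have "0 \<le> G b - G a" using has_integral_nonneg[OF hi] nn by simp
  moreover have "integral\<^sup>L lborel (\<lambda>x. indicator {a..b} x * g x) = enn2real (\<integral>\<^sup>+x. ennreal (indicator {a..b} x * g x) \<partial>lborel)"
    by (rule integral_eq_nn_integral) (use nn meas in \<open>auto intro!: AE_I2 simp: indicator_def\<close>)
  ultimately show ?thesis using nn' by simp
qed

context params
begin

lemma integral_beta: "f \<in> borel_measurable borel \<Longrightarrow> integral\<^sup>L beta f = integral\<^sup>L lborel (\<lambda>w. gB w * f w)"
  unfolding beta_def by (subst integral_density) (auto simp: gB_nonneg)

lemma T1:
  assumes s0: "0 < s0" "s0 < 1"
  shows "integral\<^sup>L beta (\<lambda>w. indicator {s0<..} w * w powr (-\<delta>)) = (1-s0) powr bb * s0 powr (-bb) / (bb * Beta aa bb)"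
proof -
  define G where "G w = - (((1-w)/w) powr bb) / bb" for w
  define g where "g w = w powr (-bb-1) * (1-w) powr (bb-1)" for w
  have cont: "continuous_on {s0..1} G" unfolding G_def using s0 bb_pos
    by (auto intro!: continuous_intros continuous_on_powr')
  have der: "(G has_real_derivative g x) (at x)" if x: "x \<in> {s0<..<1}" for x
  proof -
    have x0: "0 < x" "x < 1" using x s0 by auto
    have d1: "((\<lambda>w. (1-w)/w) has_real_derivative (-1/x^2)) (at x)"
      using x0 by (auto intro!: derivative_eq_intros simp: field_simps power2_eq_square)
    have pos: "(1-x)/x > 0" using x0 by simp
    have d2: "((\<lambda>w. ((1-w)/w) powr bb) has_real_derivative (bb * ((1-x)/x) powr (bb-1)) * (-1/x^2)) (at x)"
      by (rule DERIV_chain2[OF has_real_derivative_powr[OF pos] d1])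
    have d3: "(G has_real_derivative (-1/bb) * ((bb * ((1-x)/x) powr (bb-1)) * (-1/x^2))) (at x)"
      unfolding G_def using DERIV_cmult[OF d2, of "-1/bb"] by (simp add: field_simps)
    have e1: "((1-x)/x) powr (bb-1) = (1-x) powr (bb-1) / x powr (bb-1)"
      using x0 by (simp add: powr_divide)
    have e2: "x powr (bb-1) * x^2 = x powr (bb+1)"
    proof -
      have "bb - 1 + 2 = bb + 1" by simp
      then have "x powr (bb+1) = x powr (bb - 1 + 2)" by (simp only:)
      also have "\<dots> = x powr (bb - 1) * x powr 2" by (rule powr_add)
      finally have "x powr (bb+1) = x powr (bb - 1) * x powr 2" .
      then show ?thesis using x0 by simp
    qed
    have e3: "x powr (-bb-1) = 1 / x powr (bb+1)"
      using x0 by (simp add: powr_minus_divide[symmetric] powr_minus)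
    have "(-1/bb) * ((bb * ((1-x)/x) powr (bb-1)) * (-1/x^2)) = g x"
      unfolding g_def e1 e3 e2[symmetric] using bb_pos x0 by (simp add: field_simps)
    with d3 show ?thesis by simp
  qed
  have I: "integral\<^sup>L lborel (\<lambda>x. indicator {s0..1} x * g x) = G 1 - G s0"
    by (rule ftc_lebesgue[OF _ cont der]) (use s0 in \<open>auto simp: g_def\<close>)
  have "integral\<^sup>L beta (\<lambda>w. indicator {s0<..} w * w powr (-\<delta>)) =
      integral\<^sup>L lborel (\<lambda>w. gB w * (indicator {s0<..} w * w powr (-\<delta>)))"
    by (rule integral_beta) measurable
  also have "\<dots> = integral\<^sup>L lborel (\<lambda>w. (indicator {s0..1} w * g w) / Beta aa bb)"
  proof (rule integral_cong_AE)
    show "AE w in lborel. gB w * (indicator {s0<..} w * w powr (-\<delta>)) = indicator {s0..1} w * g w / Beta aa bb"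
      using AE_lborel_singleton[of s0]
    proof (rule AE_mp, intro AE_I2 impI)
      fix w :: real assume w: "w \<noteq> s0"
      consider "w < s0" | "s0 < w \<and> w < 1" | "w = 1" | "1 < w" using w by linarith
      then show "gB w * (indicator {s0<..} w * w powr (-\<delta>)) = indicator {s0..1} w * g w / Beta aa bb"
      proof cases
        case 2
        then have w0: "0 < w" "w < 1" using s0 by auto
        have ee: "aa - 1 + - \<delta> = -bb-1" using aa_bb by simp
        have "w powr (aa - 1) * w powr (-\<delta>) = w powr (-bb-1)"
          by (simp only: powr_add[symmetric] ee)
        then show ?thesis using 2 w0 by (simp add: gB_eq g_def indicator_def field_simps)
      qed (use s0 in \<open>auto simp: gB_out g_def indicator_def\<close>)
    qed
  qed (auto simp: g_def)
  also have "\<dots> = (G 1 - G s0) / Beta aa bb"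
    using I by simp
  also have "\<dots> = (1-s0) powr bb * s0 powr (-bb) / (bb * Beta aa bb)"
  proof -
    have "G 1 = 0" by (simp add: G_def)
    moreover have "G s0 = - ((1-s0) powr bb / s0 powr bb) / bb"
      using s0 by (simp add: G_def powr_divide)
    moreover have "s0 powr (-bb) = 1 / s0 powr bb" by (rule powr_minus_divide)
    ultimately show ?thesis by simp
  qed
  finally show ?thesis .
qed

lemma T2:
  assumes s0: "0 < s0" "s0 < 1"
  shows "integral\<^sup>L beta (\<lambda>w. indicator {..<s0} w * (1-w) powr (-\<delta>)) = s0 powr aa * (1-s0) powr (-aa) / (aa * Beta aa bb)"
proof -
  define G where "G w = ((w/(1-w)) powr aa) / aa" for w
  define g where "g w = w powr (aa-1) * (1-w) powr (-aa-1)" for w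
  have cont: "continuous_on {0..s0} G" unfolding G_def using s0 aa_pos
    by (auto intro!: continuous_intros continuous_on_powr')
  have der: "(G has_real_derivative g x) (at x)" if x: "x \<in> {0<..<s0}" for x
  proof -
    have x0: "0 < x" "x < 1" using x s0 by auto
    have d1: "((\<lambda>w. w/(1-w)) has_real_derivative (1/(1-x)^2)) (at x)"
      using x0 by (auto intro!: derivative_eq_intros simp: field_simps power2_eq_square)
    have pos: "x/(1-x) > 0" using x0 by simp
    have d2: "((\<lambda>w. (w/(1-w)) powr aa) has_real_derivative (aa * (x/(1-x)) powr (aa-1)) * (1/(1-x)^2)) (at x)"
      by (rule DERIV_chain2[OF has_real_derivative_powr[OF pos] d1])
    have d3: "(G has_real_derivative (1/aa) * ((aa * (x/(1-x)) powr (aa-1)) * (1/(1-x)^2))) (at x)"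
      unfolding G_def using DERIV_cmult[OF d2, of "1/aa"] by (simp add: field_simps)
    have e1: "(x/(1-x)) powr (aa-1) = x powr (aa-1) / (1-x) powr (aa-1)"
      using x0 by (simp add: powr_divide)
    have e2: "(1-x) powr (aa-1) * (1-x)^2 = (1-x) powr (aa+1)"
    proof -
      have "aa - 1 + 2 = aa + 1" by simp
      then have "(1-x) powr (aa+1) = (1-x) powr (aa - 1 + 2)" by (simp only:)
      also have "\<dots> = (1-x) powr (aa - 1) * (1-x) powr 2" by (rule powr_add)
      finally have "(1-x) powr (aa+1) = (1-x) powr (aa - 1) * (1-x) powr 2" .
      then show ?thesis using x0 by simp
    qed
    have e3: "(1-x) powr (-aa-1) = 1 / (1-x) powr (aa+1)"
      using x0 by (simp add: powr_minus_divide[symmetric] powr_minus)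
    have "(1/aa) * ((aa * (x/(1-x)) powr (aa-1)) * (1/(1-x)^2)) = g x"
      unfolding g_def e1 e3 e2[symmetric] using aa_pos x0 by (simp add: field_simps)
    with d3 show ?thesis by simp
  qed
  have I: "integral\<^sup>L lborel (\<lambda>x. indicator {0..s0} x * g x) = G s0 - G 0"
    by (rule ftc_lebesgue[OF _ cont der]) (use s0 in \<open>auto simp: g_def\<close>)
  have "integral\<^sup>L beta (\<lambda>w. indicator {..<s0} w * (1-w) powr (-\<delta>)) =
      integral\<^sup>L lborel (\<lambda>w. gB w * (indicator {..<s0} w * (1-w) powr (-\<delta>)))"
    by (rule integral_beta) measurable
  also have "\<dots> = integral\<^sup>L lborel (\<lambda>w. (indicator {0..s0} w * g w) / Beta aa bb)"
  proof (rule integral_cong_AE)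
    show "AE w in lborel. gB w * (indicator {..<s0} w * (1-w) powr (-\<delta>)) = indicator {0..s0} w * g w / Beta aa bb"
      using AE_lborel_singleton[of s0]
    proof (rule AE_mp, intro AE_I2 impI)
      fix w :: real assume w: "w \<noteq> s0"
      consider "w < 0" | "w = 0" | "0 < w \<and> w < s0" | "s0 < w" using w by linarith
      then show "gB w * (indicator {..<s0} w * (1-w) powr (-\<delta>)) = indicator {0..s0} w * g w / Beta aa bb"
      proof cases
        case 3
        then have w0: "0 < w" "w < 1" using s0 by auto
        have ee: "bb - 1 + - \<delta> = -aa-1" using aa_bb by simp
        have "(1-w) powr (bb - 1) * (1-w) powr (-\<delta>) = (1-w) powr (-aa-1)"
          by (simp only: powr_add[symmetric] ee)
        then show ?thesis using 3 w0 by (simp add: gB_eq g_def indicator_def field_simps)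
      qed (use s0 in \<open>auto simp: gB_out g_def indicator_def\<close>)
    qed
  qed (auto simp: g_def)
  also have "\<dots> = (G s0 - G 0) / Beta aa bb"
    using I by simp
  also have "\<dots> = s0 powr aa * (1-s0) powr (-aa) / (aa * Beta aa bb)"
  proof -
    have "G 0 = 0" by (simp add: G_def)
    moreover have "G s0 = (s0 powr aa / (1-s0) powr aa) / aa"
      using s0 by (simp add: G_def powr_divide)
    moreover have "(1-s0) powr (-aa) = 1 / (1-s0) powr aa" by (rule powr_minus_divide)
    ultimately show ?thesis by simp
  qed
  finally show ?thesis .
qed

lemma integrable_beta_bdd:
  assumes [measurable]: "f \<in> borel_measurable borel" and b: "\<And>w. 0 < w \<Longrightarrow> w < 1 \<Longrightarrow> \<bar>f w\<bar> \<le> (K::real)"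
  shows "integrable beta f"
proof -
  interpret B: prob_space beta by (rule prob_beta)
  show ?thesis
    by (rule B.integrable_const_bound[where B=K]) (use AE_beta b in \<open>auto simp: measurable_cong_sets[OF sets_beta refl]\<close>)
qed

definition H :: "real \<Rightarrow> real \<Rightarrow> real" where
  "H s0 w = c * (min 1 (s0/w)) powr \<delta> + indicator {..<s0} w * (1-c) * (1 - ((1-s0)/(1-w)) powr \<delta>)"

lemma H_meas[measurable]: "H s0 \<in> borel_measurable borel"
  unfolding H_def by measurable

lemma beta_Iic_Iio: "measure beta {..<s0} = measure beta {..s0}"
proof -
  interpret B: prob_space beta by (rule prob_beta)
  have e: "{..s0} = {..<s0} \<union> {s0}" by auto
  have "measure beta ({..<s0} \<union> {s0}) = measure beta {..<s0} + measure beta {s0}"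
    by (rule B.finite_measure_Union) (auto simp: sets_beta)
  then have "measure beta {..s0} = measure beta {..<s0} + measure beta {s0}"
    by (simp only: e)
  then show ?thesis by (simp add: beta_singleton)
qed

lemma Iden:
  assumes s0: "0 \<le> s0" "s0 < 1"
  shows "integral\<^sup>L beta (H s0) = measure beta {..s0}"
proof (cases "s0 = 0")
  case True
  interpret B: prob_space beta by (rule prob_beta)
  have "integral\<^sup>L beta (H s0) = integral\<^sup>L beta (\<lambda>_. 0)"
    by (rule integral_cong_AE) (use AE_beta True d0 in \<open>auto simp: H_def measurable_cong_sets[OF sets_beta refl]\<close>)
  moreover have "measure beta {..s0} = 0"
  proof -
    have "AE w in beta. \<not> (w \<le> s0)" using AE_beta True by auto
    from emeasure_eq_0_AE[OF this] have "emeasure beta {..s0} = 0" by (simp add: atMost_def)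
    then show ?thesis by (simp add: measure_def)
  qed
  ultimately show ?thesis by simp
next
  case False
  then have s0': "0 < s0" "s0 < 1" using s0 by auto
  interpret B: prob_space beta by (rule prob_beta)
  define f1 where "f1 w = (indicator {..s0} w :: real)" for w :: real
  define f2 where "f2 w = indicator {s0<..} w * w powr (-\<delta>)" for w :: real
  define f3 where "f3 w = (indicator {..<s0} w :: real)" for w :: real
  define f4 where "f4 w = indicator {..<s0} w * (1-w) powr (-\<delta>)" for w :: real
  have [measurable]: "f1 \<in> borel_measurable borel" "f2 \<in> borel_measurable borel"
    "f3 \<in> borel_measurable borel" "f4 \<in> borel_measurable borel"
    unfolding f1_def f2_def f3_def f4_def by measurable
  have i1: "integrable beta f1" by (rule integrable_beta_bdd[where K=1]) (auto simp: f1_def indicator_def)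
  have i3: "integrable beta f3" by (rule integrable_beta_bdd[where K=1]) (auto simp: f3_def indicator_def)
  have i2: "integrable beta f2"
  proof (rule integrable_beta_bdd[where K="s0 powr (-\<delta>)"])
    fix w :: real assume "0 < w" "w < 1"
    then show "\<bar>f2 w\<bar> \<le> s0 powr (-\<delta>)"
      using s0' d0 by (auto simp: f2_def indicator_def intro!: powr_mono2')
  qed simp
  have i4: "integrable beta f4"
  proof (rule integrable_beta_bdd[where K="(1-s0) powr (-\<delta>)"])
    fix w :: real assume "0 < w" "w < 1"
    then show "\<bar>f4 w\<bar> \<le> (1-s0) powr (-\<delta>)"
      using s0' d0 by (auto simp: f4_def indicator_def intro!: powr_mono2')
  qed simp
  have "integral\<^sup>L beta (H s0) = integral\<^sup>L beta (\<lambda>w. (c * f1 w + (c * s0 powr \<delta>) * f2 w) +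
       ((1-c) * f3 w - ((1-c) * (1-s0) powr \<delta>) * f4 w))"
  proof (rule integral_cong_AE)
    show "AE w in beta. H s0 w = (c * f1 w + (c * s0 powr \<delta>) * f2 w) + ((1-c) * f3 w - ((1-c) * (1-s0) powr \<delta>) * f4 w)"
      using AE_beta
    proof (rule AE_mp, intro AE_I2 impI)
      fix w :: real assume w: "0 < w \<and> w < 1"
      have A: "c * (min 1 (s0/w)) powr \<delta> = c * f1 w + (c * s0 powr \<delta>) * f2 w"
      proof (cases "w \<le> s0")
        case True
        then have "min 1 (s0/w) = 1" using w by (auto simp: field_simps)
        then show ?thesis using True by (simp add: f1_def f2_def)
      next
        case False
        then have "min 1 (s0/w) = s0/w" using w by (auto simp: field_simps)
        moreover have "(s0/w) powr \<delta> = s0 powr \<delta> * w powr (-\<delta>)"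
          using w s0' by (simp add: powr_divide powr_minus_divide)
        ultimately show ?thesis using False by (simp add: f1_def f2_def)
      qed
      have B: "indicator {..<s0} w * (1-c) * (1 - ((1-s0)/(1-w)) powr \<delta>) =
          (1-c) * f3 w - ((1-c) * (1-s0) powr \<delta>) * f4 w"
      proof (cases "w < s0")
        case True
        have "((1-s0)/(1-w)) powr \<delta> = (1-s0) powr \<delta> * (1-w) powr (-\<delta>)"
          using w s0' by (simp add: powr_divide powr_minus_divide)
        then show ?thesis using True by (simp add: f3_def f4_def algebra_simps)
      qed (simp add: f3_def f4_def)
      show "H s0 w = (c * f1 w + (c * s0 powr \<delta>) * f2 w) + ((1-c) * f3 w - ((1-c) * (1-s0) powr \<delta>) * f4 w)"
        unfolding H_def A B ..
    qed
  qed (auto simp: measurable_cong_sets[OF sets_beta refl])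
  also have "\<dots> = (c * integral\<^sup>L beta f1 + (c * s0 powr \<delta>) * integral\<^sup>L beta f2) +
       ((1-c) * integral\<^sup>L beta f3 - ((1-c) * (1-s0) powr \<delta>) * integral\<^sup>L beta f4)"
    using i1 i2 i3 i4 by simp
  also have "integral\<^sup>L beta f1 = measure beta {..s0}"
    unfolding f1_def by (simp add: sets_beta)
  also have "integral\<^sup>L beta f3 = measure beta {..s0}"
    unfolding f3_def by (simp add: sets_beta beta_Iic_Iio)
  also have "integral\<^sup>L beta f2 = (1-s0) powr bb * s0 powr (-bb) / (bb * Beta aa bb)"
    unfolding f2_def by (rule T1[OF s0'])
  also have "integral\<^sup>L beta f4 = s0 powr aa * (1-s0) powr (-aa) / (aa * Beta aa bb)"
    unfolding f4_def by (rule T2[OF s0'])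
  also have "(c * s0 powr \<delta>) * ((1-s0) powr bb * s0 powr (-bb) / (bb * Beta aa bb)) =
     ((1-c) * (1-s0) powr \<delta>) * (s0 powr aa * (1-s0) powr (-aa) / (aa * Beta aa bb))"
  proof -
    have q1: "\<delta> + - bb = aa" "\<delta> + - aa = bb" using aa_bb by auto
    have p1: "s0 powr \<delta> * s0 powr (-bb) = s0 powr aa"
      by (simp only: powr_add[symmetric] q1)
    have p2: "(1-s0) powr \<delta> * (1-s0) powr (-aa) = (1-s0) powr bb"
      by (simp only: powr_add[symmetric] q1)
    have cb: "c / bb = (1-c) / aa" using c0 c1 d0 by (simp add: aa_def bb_def field_simps)
    have "(c * s0 powr \<delta>) * ((1-s0) powr bb * s0 powr (-bb) / (bb * Beta aa bb)) =
        (c / bb) * ((s0 powr \<delta> * s0 powr (-bb)) * (1-s0) powr bb) / Beta aa bb"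
      by (simp add: field_simps)
    also have "\<dots> = ((1-c) / aa) * (s0 powr aa * ((1-s0) powr \<delta> * (1-s0) powr (-aa))) / Beta aa bb"
      unfolding p1 p2 cb by simp
    also have "\<dots> = ((1-c) * (1-s0) powr \<delta>) * (s0 powr aa * (1-s0) powr (-aa) / (aa * Beta aa bb))"
      by (simp add: field_simps)
    finally show ?thesis .
  qed
  finally show ?thesis by (simp add: algebra_simps)
qed

end



context params
begin

abbreviation F where "F \<equiv> Fdist c \<delta>"

lemma F_cont: "continuous_on UNIV F"
proof -
  have h: "2 powr \<delta> * (1/2) powr \<delta> = 1" by (simp add: powr_mult[symmetric])
  have c1': "continuous_on {..0} F"
    by (rule continuous_on_eq[where f="\<lambda>_. 0"]) (auto simp: Fdist_def)
  have c2': "continuous_on {0..1/2} F"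
    by (rule continuous_on_eq[where f="\<lambda>x. c * 2 powr \<delta> * x powr \<delta>"])
       (use d0 in \<open>auto simp: Fdist_def intro!: continuous_intros continuous_on_powr'\<close>)
  have c3': "continuous_on {1/2..1} F"
  proof (rule continuous_on_eq[where f="\<lambda>x. 1 - (1-c) * 2 powr \<delta> * (1-x) powr \<delta>"])
    show "continuous_on {1/2..1} (\<lambda>x. 1 - (1-c) * 2 powr \<delta> * (1-x) powr \<delta>)"
      using d0 by (auto intro!: continuous_intros continuous_on_powr')
    fix x :: real assume x: "x \<in> {1/2..1}"
    show "1 - (1-c) * 2 powr \<delta> * (1-x) powr \<delta> = F x"
    proof (cases "x = 1/2")
      case True
      have "1 - (1-c) * 2 powr \<delta> * (1/2) powr \<delta> = c * 2 powr \<delta> * (1/2) powr \<delta>"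
        using h by (simp add: algebra_simps)
      then show ?thesis unfolding True by (simp add: Fdist_def)
    qed (use x in \<open>auto simp: Fdist_def\<close>)
  qed
  have c4': "continuous_on {1..} F"
    by (rule continuous_on_eq[where f="\<lambda>_. 1"]) (use d0 in \<open>auto simp: Fdist_def\<close>)
  have "continuous_on ({..0} \<union> {0..1/2} \<union> {1/2..1} \<union> {1..}) F"
    by (intro continuous_on_closed_Un c1' c2' c3' c4') auto
  moreover have "{..0} \<union> {0..1/2} \<union> {1/2..1} \<union> {1..} = (UNIV :: real set)" by auto
  ultimately show ?thesis by simp
qed

lemma F_low: "0 \<le> q \<Longrightarrow> q \<le> 1/2 \<Longrightarrow> F q = c * (2*q) powr \<delta>"
  by (auto simp: Fdist_def powr_mult)

lemma F_high: "0 \<le> q \<Longrightarrow> q \<le> 1/2 \<Longrightarrow> F (1-q) = 1 - (1-c) * (2*q) powr \<delta>"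
proof -
  assume q: "0 \<le> q" "q \<le> 1/2"
  show ?thesis
  proof (cases "q = 1/2")
    case True
    have h: "2 powr \<delta> * (1/2) powr \<delta> = 1" by (simp add: powr_mult[symmetric])
    have "c * 2 powr \<delta> * (1/2) powr \<delta> = 1 - (1-c)" using h by (simp add: algebra_simps)
    moreover have "1 - (1/2::real) = 1/2" "2 * (1/2::real) = 1" by simp_all
    ultimately show ?thesis unfolding True by (simp add: Fdist_def)
  qed (use q in \<open>auto simp: Fdist_def powr_mult\<close>)
qed

end

context setting
begin

lemma cdf_PX: "cdf PX t = F t"
  using Xcdf[of 1 t] Xmeas[of 1]
  by (simp add: PX_def cdf_def measure_distr vimage_def Int_def conj_commute)

interpretation RD: real_distribution PX by (rule PX_real_distr)

lemma PX_single: "measure PX {q} = 0"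
proof -
  have "isCont (cdf PX) q" unfolding cdf_PX[abs_def]
    using F_cont by (simp add: continuous_on_eq_continuous_at)
  then show ?thesis by (simp add: RD.isCont_cdf)
qed

lemma PX_Ioc: "a \<le> b \<Longrightarrow> measure PX {x. a < x \<and> x \<le> b} = F b - F a"
proof -
  assume ab: "a \<le> b"
  show ?thesis
  proof (cases "a = b")
    case False
    then have "a < b" using ab by simp
    from RD.cdf_diff_eq[OF this] show ?thesis by (simp add: cdf_PX greaterThanAtMost_def greaterThan_def atMost_def Int_def)
  next
    case True then have e: "{x. a < x \<and> x \<le> b} = {}" by auto
    show ?thesis by (simp only: e) (simp add: True)
  qed
qed

lemma PX_add_point:
  assumes "A \<in> sets borel" "q \<notin> A"
  shows "measure PX (insert q A) = measure PX A"
proof -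
  have "measure PX (A \<union> {q}) = measure PX A + measure PX {q}"
    using assms by (intro RD.finite_measure_Union) (auto simp: sets_PX)
  then show ?thesis by (simp add: PX_single)
qed

lemma PX_Icc: "a \<le> b \<Longrightarrow> measure PX {x. a \<le> x \<and> x \<le> b} = F b - F a"
proof -
  assume ab: "a \<le> b"
  have "{x. a \<le> x \<and> x \<le> b} = insert a {x. a < x \<and> x \<le> b}" using ab by auto
  then show ?thesis using PX_add_point[of "{x. a < x \<and> x \<le> b}" a] PX_Ioc[OF ab] by simp
qed

lemma PX_Ico: "a \<le> b \<Longrightarrow> measure PX {x. a \<le> x \<and> x < b} = F b - F a"
proof -
  assume ab: "a \<le> b"
  show ?thesis
  proof (cases "a = b")
    case False
    have "{x. a \<le> x \<and> x \<le> b} = insert b {x. a \<le> x \<and> x < b}" using ab by auto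
    then show ?thesis using PX_add_point[of "{x. a \<le> x \<and> x < b}" b] PX_Icc[OF ab] by simp
  next
    case True then have e: "{x. a \<le> x \<and> x < b} = {}" by auto
    show ?thesis by (simp only: e) (simp add: True)
  qed
qed

lemma AE_PX: "AE x in PX. 0 \<le> x \<and> x \<le> 1"
proof -
  have "measure PX {x. 0 \<le> x \<and> x \<le> 1} = 1"
    using PX_Icc[of 0 1] by (simp add: Fdist_def)
  then have "AE x in PX. x \<in> {x. 0 \<le> x \<and> x \<le> 1}"
    by (intro RD.AE_prob_1) 
  then show ?thesis by simp
qed

lemma al_meas[measurable]: "f \<in> borel_measurable N \<Longrightarrow> (\<lambda>x. al (f x)) \<in> borel_measurable N"
proof -
  assume f: "f \<in> borel_measurable N"
  then have [measurable]: "f \<in> N \<rightarrow>\<^sub>M borel \<Otimes>\<^sub>M borel" by (simp add: borel_prod)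
  show ?thesis unfolding al_def by measurable
qed

lemma uu_meas[measurable]: "f \<in> borel_measurable N \<Longrightarrow> (\<lambda>x. uu (f x)) \<in> borel_measurable N"
proof -
  assume f: "f \<in> borel_measurable N"
  then have [measurable]: "f \<in> N \<rightarrow>\<^sub>M borel \<Otimes>\<^sub>M borel" by (simp add: borel_prod)
  show ?thesis unfolding uu_def by measurable
qed

lemma step_alw:
  assumes "valid s" "0 \<le> x" "x \<le> 1"
  shows "al (step s x) + uu (step s x) * w =
    (if 2 * snd s * x < uu s then al s + 2 * snd s * x*w
     else if 1 < 2 * snd s * x then al s + 2 * snd s * x - 1 + (2 * snd s - 2 * snd s * x)*w
     else al s + uu s * w)"
  using step_cut1[OF assms(1,2)] step_cut2[OF assms(1,3)] step_mid[OF assms(1)] by auto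

lemma hv_formula:
  assumes v: "valid s" and u0: "0 < uu s" and t1: "al s \<le> t" and t2: "t < al s + uu s"
    and w: "0 < w" "w < 1"
  defines "s0 \<equiv> (t - al s) / uu s" and "\<kappa> \<equiv> (2 * uu s / (2 * snd s)) powr \<delta>"
  shows "measure PX {x. al (step s x) + uu (step s x) * w \<le> t} = \<kappa> * H s0 w + (1 - \<kappa>) * indicator {..s0} w"
proof -
  define L where "L = 2 * snd s"
  define u where "u = uu s"
  define a where "a = al s"
  have uL: "u = L - 1" by (simp add: u_def L_def uu_def)
  have L12: "1 \<le> L" "L \<le> 2" using v by (auto simp: L_def valid_def)
  have u01: "0 < u" "u \<le> 1" using u0 L12 uL by (auto simp: u_def)
  have Lpos: "0 < L" using L12 by simp
  have s01: "0 \<le> s0" "s0 < 1" using t1 t2 u0 by (auto simp: s0_def field_simps)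
  have ts0: "t - a = u * s0" using u0 by (simp add: s0_def a_def u_def)
  have uL2: "u / L \<le> 1/2" using L12 uL by (simp add: field_simps)
  have uL0: "0 \<le> u / L" using u01 Lpos by simp
  have iL: "1 / L = 1 - u / L" using uL Lpos by (simp add: field_simps)
  have \<kappa>: "\<kappa> = (2 * (u / L)) powr \<delta>" by (simp add: \<kappa>_def u_def L_def)
  define p where "p = (t - a) / (L * w)"
  define q where "q = (a + u - t) / (L * (1 - w))"
  have p0: "0 \<le> p" using t1 Lpos w by (simp add: p_def a_def)
  have q0: "0 < q" using t2 Lpos w by (simp add: q_def a_def u_def)
  have p_eq: "p = (u / L) * (s0 / w)" using ts0 by (simp add: p_def)
  have q_eq: "q = (u / L) * ((1 - s0) / (1 - w))"
  proof -
    have "a + u - t = u * (1 - s0)" using ts0 by (simp add: algebra_simps)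
    then show ?thesis by (simp add: q_def)
  qed
  define A1 where "A1 = {x. 0 \<le> x \<and> x < u / L \<and> x \<le> p}"
  define A2 where "A2 = (if w \<le> s0 then {x. u / L \<le> x \<and> x \<le> 1 / L} else {})"
  define A3 where "A3 = {x. 1 / L < x \<and> x \<le> 1 - q}"
  let ?S = "{x. al (step s x) + uu (step s x) * w \<le> t}"
  have e6: "a + u * w \<le> t \<longleftrightarrow> w \<le> s0" using ts0 u01 by (simp add: algebra_simps)
  have mem: "x \<in> ?S \<longleftrightarrow> x \<in> A1 \<union> A2 \<union> A3" if x: "0 \<le> x" "x \<le> 1" for x
  proof -
    have e1: "L * x < u \<longleftrightarrow> x < u / L" using Lpos by (simp add: pos_less_divide_eq mult.commute)
    have e2: "a + L * x * w \<le> t \<longleftrightarrow> x \<le> p"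
      using Lpos w by (simp add: p_def pos_le_divide_eq algebra_simps)
    have e3: "1 < L * x \<longleftrightarrow> 1 / L < x" using Lpos by (simp add: pos_divide_less_eq mult.commute)
    have e5: "u \<le> L * x \<longleftrightarrow> u / L \<le> x" "L * x \<le> 1 \<longleftrightarrow> x \<le> 1 / L"
      using Lpos by (simp_all add: pos_divide_le_eq pos_le_divide_eq mult.commute)
    have e4: "a + L * x - 1 + (L - L * x) * w \<le> t \<longleftrightarrow> x \<le> 1 - q"
    proof -
      have "a + L * x - 1 + (L - L * x) * w \<le> t \<longleftrightarrow> a + u - t \<le> (L * (1 - w)) * (1 - x)"
        by (simp add: algebra_simps uL)
      also have "\<dots> \<longleftrightarrow> q \<le> 1 - x"
        using Lpos w by (simp add: q_def pos_divide_le_eq mult.commute)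
      finally show ?thesis by linarith
    qed
    have sa: "al (step s x) + uu (step s x) * w =
      (if L*x < u then a + L*x*w else if 1 < L*x then a + L*x - 1 + (L - L*x)*w else a + u * w)"
      using step_alw[OF v x, of w] by (simp add: L_def u_def a_def)
    have uL1: "u / L \<le> 1 / L" using u01 Lpos by (simp add: divide_right_mono)
    show ?thesis
    proof (cases "L * x < u")
      case True
      then show ?thesis using sa e1 e2 e3 uL1 x by (auto simp: A1_def A2_def A3_def)
    next
      case False
      note F1 = this
      show ?thesis
      proof (cases "1 < L * x")
        case True
        then show ?thesis using F1 sa e1 e4 e3 uL1 x by (auto simp: A1_def A2_def A3_def)
      next
        case False
        then show ?thesis using F1 sa e1 e3 e5 e6 x by (auto simp: A1_def A2_def A3_def)
      qed
    qed
  qed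
  have sets: "A1 \<in> sets borel" "A2 \<in> sets borel" "A3 \<in> sets borel"
    unfolding A1_def A2_def A3_def by auto
  have Smeas: "?S \<in> sets borel" by measurable
  have "measure PX ?S = measure PX (A1 \<union> A2 \<union> A3)"
  proof (rule measure_eq_AE)
    show "AE x in PX. x \<in> ?S \<longleftrightarrow> x \<in> A1 \<union> A2 \<union> A3"
      using AE_PX mem by auto
  qed (use sets Smeas in \<open>auto simp: sets_PX\<close>)
  also have "\<dots> = measure PX A1 + measure PX A2 + measure PX A3"
  proof -
    have d12: "A1 \<inter> A2 = {}" by (auto simp: A1_def A2_def)
    have uL1: "u / L \<le> 1 / L" using u01 Lpos by (simp add: divide_right_mono)
    have d3: "(A1 \<union> A2) \<inter> A3 = {}" using uL1 by (auto simp: A1_def A2_def A3_def)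
    have "measure PX (A1 \<union> A2 \<union> A3) = measure PX (A1 \<union> A2) + measure PX A3"
      by (rule RD.finite_measure_Union) (use sets d3 in \<open>auto simp: sets_PX\<close>)
    moreover have "measure PX (A1 \<union> A2) = measure PX A1 + measure PX A2"
      by (rule RD.finite_measure_Union) (use sets d12 in \<open>auto simp: sets_PX\<close>)
    ultimately show ?thesis by simp
  qed
  also have "measure PX A1 = c * \<kappa> * (min 1 (s0/w)) powr \<delta>"
  proof -
    have m: "measure PX A1 = F (min (u / L) p)"
    proof (cases "p < u / L")
      case True
      then have "A1 = {x. 0 \<le> x \<and> x \<le> p}" by (auto simp: A1_def)
      then show ?thesis using PX_Icc[OF p0] True by (simp add: Fdist_def)
    next
      case False
      then have "A1 = {x. 0 \<le> x \<and> x < u / L}" by (auto simp: A1_def)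
      then show ?thesis using PX_Ico[OF uL0] False by (simp add: Fdist_def)
    qed
    have mn: "min (u / L) p = (u / L) * min 1 (s0 / w)"
      unfolding p_eq using uL0 by (simp add: min_mult_distrib_left)
    have m0: "0 \<le> min 1 (s0 / w)" using s01 w by simp
    have "F (min (u / L) p) = c * (2 * min (u / L) p) powr \<delta>"
    proof (rule F_low)
      show "0 \<le> min (u / L) p" using uL0 p0 by simp
      have "min (u / L) p \<le> u / L" by simp
      then show "min (u / L) p \<le> 1/2" using uL2 by linarith
    qed
    also have "\<dots> = c * ((2 * (u / L)) * min 1 (s0 / w)) powr \<delta>"
      unfolding mn by (simp add: mult.assoc)
    also have "\<dots> = c * \<kappa> * (min 1 (s0/w)) powr \<delta>"
    proof -
      have "((2 * (u / L)) * min 1 (s0 / w)) powr \<delta> = (2 * (u / L)) powr \<delta> * (min 1 (s0 / w)) powr \<delta>"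
        by (rule powr_mult)
      then show ?thesis by (simp add: \<kappa>)
    qed
    finally show ?thesis using m by simp
  qed
  also have "measure PX A2 = (1 - \<kappa>) * indicator {..s0} w"
  proof (cases "w \<le> s0")
    case True
    have "measure PX A2 = F (1 / L) - F (u / L)"
      using True PX_Icc[of "u/L" "1/L"] u01 Lpos by (simp add: A2_def divide_right_mono)
    also have "\<dots> = 1 - \<kappa>"
      unfolding iL using F_high[OF uL0 uL2] F_low[OF uL0 uL2] by (simp add: \<kappa> algebra_simps)
    finally show ?thesis using True by simp
  qed (simp add: A2_def)
  also have "measure PX A3 = indicator {..<s0} w * (1 - c) * \<kappa> * (1 - ((1-s0)/(1-w)) powr \<delta>)"
  proof (cases "w < s0")
    case True
    have q1: "q < u / L"
    proof -
      have "(1 - s0) / (1 - w) < 1" using True w by simp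
      moreover have "0 < u / L" using u01 Lpos by simp
      ultimately have "(u / L) * ((1 - s0) / (1 - w)) < (u / L) * 1"
        by (intro mult_strict_left_mono) auto
      then show ?thesis unfolding q_eq by simp
    qed
    have "measure PX A3 = F (1 - q) - F (1 / L)"
      unfolding A3_def using q1 iL by (intro PX_Ioc) simp
    also have "\<dots> = (1 - c) * (2 * (u / L)) powr \<delta> - (1 - c) * (2 * q) powr \<delta>"
      unfolding iL using F_high[OF uL0 uL2] F_high[of q] q0 q1 uL2 by simp
    also have "(2 * q) powr \<delta> = \<kappa> * ((1-s0)/(1-w)) powr \<delta>"
      unfolding q_eq using uL0 s01 w by (simp add: \<kappa> powr_mult[symmetric] mult.assoc)
    finally show ?thesis using True by (simp add: \<kappa> algebra_simps)
  next
    case False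
    have "1 - q \<le> 1 / L"
    proof -
      have "1 \<le> (1 - s0) / (1 - w)" using False w by simp
      then have "(u / L) * 1 \<le> (u / L) * ((1 - s0) / (1 - w))"
        using uL0 by (intro mult_left_mono) auto
      then have "u / L \<le> q" unfolding q_eq by simp
      then show ?thesis using iL by simp
    qed
    then have "A3 = {}" by (auto simp: A3_def)
    then show ?thesis using False by simp
  qed
  finally show ?thesis by (simp add: H_def algebra_simps)
qed

end



context setting
begin

interpretation RD: real_distribution PX by (rule PX_real_distr)
interpretation B: prob_space beta by (rule prob_beta)

definition Phi :: "real \<Rightarrow> real \<times> real \<Rightarrow> ennreal" where
  "Phi t s = emeasure beta {w. al s + uu s * w \<le> t}"

lemma Phi_le1: "Phi t s \<le> 1"
  unfolding Phi_def using B.emeasure_space_1 by (metis B.measure_le_1 B.emeasure_eq_measure ennreal_le_1)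

lemma H_bound: "0 \<le> s0 \<Longrightarrow> s0 < 1 \<Longrightarrow> 0 < w \<Longrightarrow> w < 1 \<Longrightarrow> \<bar>H s0 w\<bar> \<le> 1"
proof -
  assume s: "0 \<le> s0" "s0 < 1" "0 < w" "w < 1"
  have a: "0 \<le> (min 1 (s0/w)) powr \<delta>" "(min 1 (s0/w)) powr \<delta> \<le> 1"
    using s d0 by (auto intro!: powr_le1)
  have b: "0 \<le> indicator {..<s0} w * (1 - ((1-s0)/(1-w)) powr \<delta>)"
          "indicator {..<s0} w * (1 - ((1-s0)/(1-w)) powr \<delta>) \<le> 1"
  proof -
    show "0 \<le> indicator {..<s0} w * (1 - ((1-s0)/(1-w)) powr \<delta>)"
    proof (cases "w < s0")
      case True
      then have "(1-s0)/(1-w) \<le> 1" "0 \<le> (1-s0)/(1-w) \<or> True" using s by auto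
      then have "((1-s0)/(1-w)) powr \<delta> \<le> 1"
        using True s d0 by (auto intro!: powr_le1)
      then show ?thesis using True by simp
    qed simp
    show "indicator {..<s0} w * (1 - ((1-s0)/(1-w)) powr \<delta>) \<le> 1"
      by (auto simp: indicator_def)
  qed
  have "H s0 w = c * (min 1 (s0/w)) powr \<delta> + (1-c) * (indicator {..<s0} w * (1 - ((1-s0)/(1-w)) powr \<delta>))"
    by (simp add: H_def algebra_simps)
  moreover have "0 \<le> c * (min 1 (s0/w)) powr \<delta>" "c * (min 1 (s0/w)) powr \<delta> \<le> c"
    using a c0 by (auto intro: mult_left_le)
  moreover have "0 \<le> (1-c) * (indicator {..<s0} w * (1 - ((1-s0)/(1-w)) powr \<delta>))"
      "(1-c) * (indicator {..<s0} w * (1 - ((1-s0)/(1-w)) powr \<delta>)) \<le> 1 - c"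
    using b c1 by (auto intro: mult_left_le)
  ultimately show ?thesis by linarith
qed

lemma Phi_zero: assumes "valid s" "t < al s" shows "Phi t s = 0"
proof -
  have "AE w in beta. \<not> (al s + uu s * w \<le> t)"
    using AE_beta
  proof (rule AE_mp, intro AE_I2 impI)
    fix w :: real assume "0 < w \<and> w < 1"
    moreover have "0 \<le> uu s" using assms(1) by (simp add: valid_iff)
    ultimately have "0 \<le> uu s * w" by simp
    then show "\<not> (al s + uu s * w \<le> t)" using assms(2) by simp
  qed
  from emeasure_eq_0_AE[OF this] show ?thesis by (simp add: Phi_def)
qed

lemma Phi_one: assumes "valid s" "al s + uu s \<le> t" shows "Phi t s = 1"
proof -
  have "emeasure beta {w. al s + uu s * w \<le> t} = emeasure beta UNIV"
  proof (rule emeasure_eq_AE)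
    show "AE w in beta. (w \<in> {w. al s + uu s * w \<le> t}) = (w \<in> UNIV)"
      using AE_beta
    proof (rule AE_mp, intro AE_I2 impI)
      fix w :: real assume "0 < w \<and> w < 1"
      moreover have "0 \<le> uu s" using assms(1) by (simp add: valid_iff)
      ultimately have "uu s * w \<le> uu s" by (simp add: mult_left_le)
      then show "(w \<in> {w. al s + uu s * w \<le> t}) = (w \<in> UNIV)" using assms(2) by simp
    qed
  qed (auto simp: sets_beta)
  then show ?thesis using B.emeasure_space_1 by (simp add: Phi_def)
qed

lemma Phi_meas[measurable]: "(\<lambda>x. Phi t (step s x)) \<in> borel_measurable borel"
proof -
  have "(\<lambda>p. indicator {p. al (step s (fst p)) + uu (step s (fst p)) * snd p \<le> t} p :: ennreal)
      \<in> borel_measurable (borel \<Otimes>\<^sub>M beta)"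
    by (subst measurable_cong_sets[OF sets_pair_measure_cong[OF refl sets_beta] refl]) measurable
  then have "(\<lambda>x. \<integral>\<^sup>+w. indicator {p. al (step s (fst p)) + uu (step s (fst p)) * snd p \<le> t} (x, w) \<partial>beta)
      \<in> borel_measurable borel"
    by (rule B.borel_measurable_nn_integral_fst)
  moreover have "(\<integral>\<^sup>+w. indicator {p. al (step s (fst p)) + uu (step s (fst p)) * snd p \<le> t} (x, w) \<partial>beta)
      = Phi t (step s x)" for x
  proof -
    have "(\<integral>\<^sup>+w. indicator {p. al (step s (fst p)) + uu (step s (fst p)) * snd p \<le> t} (x, w) \<partial>beta)
       = (\<integral>\<^sup>+w. indicator {w. al (step s x) + uu (step s x) * w \<le> t} w \<partial>beta)"
      by (intro nn_integral_cong) (auto simp: indicator_def)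
    also have "\<dots> = Phi t (step s x)"
      unfolding Phi_def by (rule nn_integral_indicator) (simp add: sets_beta)
    finally show ?thesis .
  qed
  ultimately show ?thesis by simp
qed

lemma step_identity:
  assumes v: "valid s"
  shows "(\<integral>\<^sup>+x. Phi t (step s x) \<partial>PX) = Phi t s"
proof -
  have u0: "0 \<le> uu s" using v by (simp add: valid_iff)
  have Xint: "(\<integral>\<^sup>+x. Phi t (step s x) \<partial>PX) = e"
    if "AE x in PX. Phi t (step s x) = e" for e
  proof -
    have "(\<integral>\<^sup>+x. Phi t (step s x) \<partial>PX) = (\<integral>\<^sup>+x. e \<partial>PX)"
      by (rule nn_integral_cong_AE) (use that in simp)
    then show ?thesis using RD.emeasure_space_1 by simp
  qed
  consider "uu s = 0" | "0 < uu s \<and> t < al s" | "0 < uu s \<and> al s + uu s \<le> t" | "0 < uu s \<and> al s \<le> t \<and> t < al s + uu s"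
    using u0 by linarith
  then show ?thesis
  proof cases
    case 1
    show ?thesis
    proof (rule Xint)
      show "AE x in PX. Phi t (step s x) = Phi t s"
        using AE_PX
      proof (rule AE_mp, intro AE_I2 impI)
        fix x :: real assume x: "0 \<le> x \<and> x \<le> 1"
        have "snd s = 1/2" using 1 by (simp add: uu_def)
        then have "2 * snd s * x = x" by simp
        then have "step s x = s" using x 1 v by (intro step_mid) auto
        then show "Phi t (step s x) = Phi t s" by simp
      qed
    qed
  next
    case 2
    show ?thesis unfolding Phi_zero[OF v conjunct2[OF 2]]
    proof (rule Xint)
      show "AE x in PX. Phi t (step s x) = 0"
        using AE_PX
      proof (rule AE_mp, intro AE_I2 impI)
        fix x :: real assume x: "0 \<le> x \<and> x \<le> 1"
        show "Phi t (step s x) = 0"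
          using step_props[OF v, of x] x 2 by (intro Phi_zero) auto
      qed
    qed
  next
    case 3
    show ?thesis unfolding Phi_one[OF v conjunct2[OF 3]]
    proof (rule Xint)
      show "AE x in PX. Phi t (step s x) = 1"
        using AE_PX
      proof (rule AE_mp, intro AE_I2 impI)
        fix x :: real assume x: "0 \<le> x \<and> x \<le> 1"
        show "Phi t (step s x) = 1"
          using step_props[OF v, of x] x 3 by (intro Phi_one) auto
      qed
    qed
  next
    case 4
    define s0 where "s0 = (t - al s) / uu s"
    define \<kappa> where "\<kappa> = (2 * uu s / (2 * snd s)) powr \<delta>"
    have s01: "0 \<le> s0" "s0 < 1" using 4 by (auto simp: s0_def field_simps)
    define hf where "hf w = \<kappa> * H s0 w + (1 - \<kappa>) * indicator {..s0} w" for w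
    have hv: "measure PX {x. al (step s x) + uu (step s x) * w \<le> t} = hf w" if "0 < w" "w < 1" for w
      unfolding hf_def s0_def \<kappa>_def using 4 that by (intro hv_formula[OF v]) auto
    interpret pair_sigma_finite PX beta ..
    let ?f = "\<lambda>p. indicator {p. al (step s (fst p)) + uu (step s (fst p)) * snd p \<le> t} p :: ennreal"
    have fm: "?f \<in> borel_measurable (PX \<Otimes>\<^sub>M beta)"
      by (subst measurable_cong_sets[OF sets_pair_measure_cong[OF sets_PX sets_beta] refl]) measurable
    have inner_w: "(\<integral>\<^sup>+w. ?f (x, w) \<partial>beta) = Phi t (step s x)" for x
    proof -
      have "(\<integral>\<^sup>+w. ?f (x, w) \<partial>beta) = (\<integral>\<^sup>+w. indicator {w. al (step s x) + uu (step s x) * w \<le> t} w \<partial>beta)"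
        by (intro nn_integral_cong) (auto simp: indicator_def)
      also have "\<dots> = Phi t (step s x)"
        unfolding Phi_def by (rule nn_integral_indicator) (simp add: sets_beta)
      finally show ?thesis .
    qed
    have inner_x: "(\<integral>\<^sup>+x. ?f (x, w) \<partial>PX) = ennreal (measure PX {x. al (step s x) + uu (step s x) * w \<le> t})" for w
    proof -
      have "(\<integral>\<^sup>+x. ?f (x, w) \<partial>PX) = (\<integral>\<^sup>+x. indicator {x. al (step s x) + uu (step s x) * w \<le> t} x \<partial>PX)"
        by (intro nn_integral_cong) (auto simp: indicator_def)
      also have "\<dots> = emeasure PX {x. al (step s x) + uu (step s x) * w \<le> t}"
        by (rule nn_integral_indicator) (simp add: sets_PX)
      finally show ?thesis by (simp add: RD.emeasure_eq_measure)
    qed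
    have hf_meas[measurable]: "hf \<in> borel_measurable borel" unfolding hf_def by measurable
    have hf_int: "integrable beta hf"
    proof (rule integrable_beta_bdd[where K=1])
      fix w :: real assume "0 < w" "w < 1"
      then have "hf w = measure PX {x. al (step s x) + uu (step s x) * w \<le> t}" using hv[of w] by simp
      moreover have "measure PX {x. al (step s x) + uu (step s x) * w \<le> t} \<le> 1" by (rule RD.prob_le_1)
      moreover have "0 \<le> measure PX {x. al (step s x) + uu (step s x) * w \<le> t}" by (rule measure_nonneg)
      ultimately show "\<bar>hf w\<bar> \<le> 1" by simp
    qed simp
    have H_int: "integrable beta (H s0)"
      by (rule integrable_beta_bdd[where K=1]) (use H_bound s01 in auto)
    have I_int: "integrable beta (\<lambda>w. indicator {..s0} w :: real)"
      by (rule integrable_beta_bdd[where K=1]) auto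
    have "(\<integral>\<^sup>+x. Phi t (step s x) \<partial>PX) = (\<integral>\<^sup>+x. \<integral>\<^sup>+w. ?f (x, w) \<partial>beta \<partial>PX)"
      by (simp add: inner_w)
    also have "\<dots> = (\<integral>\<^sup>+w. \<integral>\<^sup>+x. ?f (x, w) \<partial>PX \<partial>beta)"
      by (rule Fubini[OF fm, symmetric])
    also have "\<dots> = (\<integral>\<^sup>+w. ennreal (hf w) \<partial>beta)"
    proof (rule nn_integral_cong_AE)
      show "AE w in beta. (\<integral>\<^sup>+x. ?f (x, w) \<partial>PX) = ennreal (hf w)"
        using AE_beta by eventually_elim (simp add: inner_x hv)
    qed
    also have "\<dots> = ennreal (integral\<^sup>L beta hf)"
    proof (rule nn_integral_eq_integral[OF hf_int])
      show "AE w in beta. 0 \<le> hf w"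
        using AE_beta by eventually_elim (simp add: hv[symmetric])
    qed
    also have "integral\<^sup>L beta hf = \<kappa> * integral\<^sup>L beta (H s0) + (1 - \<kappa>) * measure beta {..s0}"
      unfolding hf_def using H_int I_int by (simp add: sets_beta)
    also have "\<dots> = measure beta {..s0}" using Iden[OF s01] by (simp add: algebra_simps)
    also have "ennreal (measure beta {..s0}) = Phi t s"
    proof -
      have "{w. al s + uu s * w \<le> t} = {..s0}"
        using 4 by (auto simp: s0_def field_simps)
      then show ?thesis by (simp add: Phi_def B.emeasure_eq_measure)
    qed
    finally show ?thesis .
  qed
qed

end



context setting
begin

interpretation RD: real_distribution PX by (rule PX_real_distr)
interpretation B: prob_space beta by (rule prob_beta)

lemma AE_X01: "AE \<omega> in M. \<forall>n. 0 \<le> X (Suc n) \<omega> \<and> X (Suc n) \<omega> \<le> 1"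
proof (subst AE_all_countable, intro allI)
  fix n
  have e: "distr M borel (X (Suc n)) = PX" by (rule distr_X) simp
  have "AE x in distr M borel (X (Suc n)). 0 \<le> x \<and> x \<le> 1"
    unfolding e by (rule AE_PX)
  then show "AE \<omega> in M. 0 \<le> X (Suc n) \<omega> \<and> X (Suc n) \<omega> \<le> 1"
    by (rule AE_distrD[OF XSuc_meas])
qed

lemma good_props:
  assumes "\<forall>n. 0 \<le> X (Suc n) \<omega> \<and> X (Suc n) \<omega> \<le> 1"
  shows "valid (Y n \<omega>)" "incseq (\<lambda>n. al (Y n \<omega>))" "decseq (\<lambda>n. uu (Y n \<omega>))"
    "decseq (\<lambda>n. al (Y n \<omega>) + uu (Y n \<omega>))"
proof -
  have h: "\<And>k. 1 \<le> k \<Longrightarrow> 0 \<le> X k \<omega> \<and> X k \<omega> \<le> 1"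
  proof -
    fix k :: nat assume "1 \<le> k"
    then obtain m where "k = Suc m" by (cases k) auto
    then show "0 \<le> X k \<omega> \<and> X k \<omega> \<le> 1" using assms by simp
  qed
  show "valid (Y n \<omega>)" "incseq (\<lambda>n. al (Y n \<omega>))" "decseq (\<lambda>n. uu (Y n \<omega>))"
    "decseq (\<lambda>n. al (Y n \<omega>) + uu (Y n \<omega>))"
    unfolding Y_def using Zr_props[of "\<lambda>k. X k \<omega>", OF h] by auto
qed

lemma Phi_meas_gen:
  assumes f[measurable]: "f \<in> borel_measurable N"
  shows "(\<lambda>x. Phi t (f x)) \<in> borel_measurable N"
proof -
  have "(\<lambda>p. indicator {p. al (f (fst p)) + uu (f (fst p)) * snd p \<le> t} p :: ennreal)
      \<in> borel_measurable (N \<Otimes>\<^sub>M beta)"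
    by (subst measurable_cong_sets[OF sets_pair_measure_cong[OF refl sets_beta] refl]) measurable
  then have "(\<lambda>x. \<integral>\<^sup>+w. indicator {p. al (f (fst p)) + uu (f (fst p)) * snd p \<le> t} (x, w) \<partial>beta)
      \<in> borel_measurable N"
    by (rule B.borel_measurable_nn_integral_fst)
  moreover have "(\<integral>\<^sup>+w. indicator {p. al (f (fst p)) + uu (f (fst p)) * snd p \<le> t} (x, w) \<partial>beta)
      = Phi t (f x)" for x
  proof -
    have "(\<integral>\<^sup>+w. indicator {p. al (f (fst p)) + uu (f (fst p)) * snd p \<le> t} (x, w) \<partial>beta)
       = (\<integral>\<^sup>+w. indicator {w. al (f x) + uu (f x) * w \<le> t} w \<partial>beta)"
      by (intro nn_integral_cong) (auto simp: indicator_def)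
    also have "\<dots> = Phi t (f x)"
      unfolding Phi_def by (rule nn_integral_indicator) (simp add: sets_beta)
    finally show ?thesis .
  qed
  ultimately show ?thesis by simp
qed

lemma martingale: "(\<integral>\<^sup>+\<omega>. Phi t (Y n \<omega>) \<partial>M) = Phi t (0, 1)"
proof (induction n)
  case 0 then show ?case by (simp add: Y_0 prob_space.emeasure_space_1[OF prob_space_axioms])
next
  case (Suc n)
  have fm: "(\<lambda>(y, x). Phi t (step y x)) \<in> borel_measurable (borel \<Otimes>\<^sub>M borel)"
  proof -
    have "(\<lambda>p. step (fst p) (snd p) :: real \<times> real) \<in> borel_measurable (borel \<Otimes>\<^sub>M borel)"
      by (intro measurable_step) measurable
    from Phi_meas_gen[OF this] show ?thesis by (simp add: case_prod_beta)
  qed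
  have "(\<integral>\<^sup>+\<omega>. Phi t (Y (Suc n) \<omega>) \<partial>M) = (\<integral>\<^sup>+\<omega>. Phi t (step (Y n \<omega>) (X (Suc n) \<omega>)) \<partial>M)"
    by (simp add: Y_Suc)
  also have "\<dots> = (\<integral>\<^sup>+\<omega>. (\<integral>\<^sup>+x. Phi t (step (Y n \<omega>) x) \<partial>PX) \<partial>M)"
    using K_lemma[of "\<lambda>y x. Phi t (step y x)" n] fm by simp
  also have "\<dots> = (\<integral>\<^sup>+\<omega>. Phi t (Y n \<omega>) \<partial>M)"
  proof (rule nn_integral_cong_AE)
    show "AE \<omega> in M. (\<integral>\<^sup>+x. Phi t (step (Y n \<omega>) x) \<partial>PX) = Phi t (Y n \<omega>)"
      using AE_X01 by eventually_elim (intro step_identity good_props)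
  qed
  finally show ?case using Suc by simp
qed

lemma ushrink:
  assumes v: "valid y" and x: "0 \<le> x" "x \<le> 1"
  shows "uu (step y x) + uu y / 2 * indicator {..uu y / (4 * snd y)} x \<le> uu y"
proof -
  have r: "1/2 \<le> snd y" "snd y \<le> 1" using v by (auto simp: valid_def)
  have u0: "0 \<le> uu y" using v by (simp add: valid_iff)
  show ?thesis
  proof (cases "x \<le> uu y / (4 * snd y) \<and> 0 < uu y")
    case True
    then have "x * (4 * snd y) \<le> uu y" using r by (simp add: pos_le_divide_eq)
    then have h: "2 * snd y * x \<le> uu y / 2" by (simp add: algebra_simps)
    then have "2 * snd y * x < uu y" using True by linarith
    then have "uu (step y x) = 2 * snd y * x" by (rule step_cut1[OF v x(1)])
    then show ?thesis using h True by simp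
  next
    case False
    then have z: "uu y / 2 * indicator {..uu y / (4 * snd y)} x = 0" using u0 by (auto simp: indicator_def)
    show ?thesis using step_props(4)[OF v x] by (simp only: z)
  qed
qed

lemma F_q_bound:
  assumes v: "valid y"
  shows "c * (uu y / 2) powr (1 + \<delta>) \<le> uu y / 2 * F (uu y / (4 * snd y))"
proof -
  have r: "1/2 \<le> snd y" "snd y \<le> 1" using v by (auto simp: valid_def)
  have u: "0 \<le> uu y" "uu y \<le> 1" using v by (auto simp: valid_iff)
  define q where "q = uu y / (4 * snd y)"
  have q0: "0 \<le> q" "q \<le> 1/2" using r u by (auto simp: q_def field_simps)
  have "uu y / 2 \<le> uu y / (2 * snd y)" by (rule divide_left_mono) (use r u in auto)
  moreover have "2 * q = uu y / (2 * snd y)" by (simp add: q_def)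
  ultimately have "uu y / 2 \<le> 2 * q" by simp
  then have "(uu y / 2) powr \<delta> \<le> (2 * q) powr \<delta>" using u d0 by (intro powr_mono2) auto
  then have "c * (uu y / 2) powr \<delta> \<le> F q" using F_low[OF q0] c0 by simp
  then have "uu y / 2 * (c * (uu y / 2) powr \<delta>) \<le> uu y / 2 * F q" using u by (intro mult_left_mono) auto
  moreover have "(uu y / 2) powr (1 + \<delta>) = uu y / 2 * (uu y / 2) powr \<delta>"
    using u by (simp add: powr_add)
  ultimately show ?thesis by (simp add: q_def algebra_simps)
qed

definition ui :: "'a \<Rightarrow> real" where "ui \<omega> = lim (\<lambda>n. uu (Y n \<omega>))"

lemma ui_meas[measurable]: "ui \<in> borel_measurable M"
  unfolding ui_def by measurable

lemma ui_good:
  assumes g: "\<forall>n. 0 \<le> X (Suc n) \<omega> \<and> X (Suc n) \<omega> \<le> 1"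
  shows "(\<lambda>n. uu (Y n \<omega>)) \<longlonglongrightarrow> ui \<omega>" "\<And>n. ui \<omega> \<le> uu (Y n \<omega>)" "0 \<le> ui \<omega>"
proof -
  have "\<forall>i. 0 \<le> uu (Y i \<omega>)" using good_props(1)[OF g] by (simp add: valid_iff)
  from decseq_convergent[OF good_props(3)[OF g] this] obtain L where
    L: "(\<lambda>n. uu (Y n \<omega>)) \<longlonglongrightarrow> L" "\<forall>i. L \<le> uu (Y i \<omega>)" by blast
  have "ui \<omega> = L" unfolding ui_def using L(1) by (rule limI)
  then show "(\<lambda>n. uu (Y n \<omega>)) \<longlonglongrightarrow> ui \<omega>" "\<And>n. ui \<omega> \<le> uu (Y n \<omega>)" using L by auto
  show "0 \<le> ui \<omega>"
    using \<open>ui \<omega> = L\<close> L(1) \<open>\<forall>i. 0 \<le> uu (Y i \<omega>)\<close> by (metis LIMSEQ_le_const)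
qed

lemma ui_zero: "AE \<omega> in M. ui \<omega> = 0"
proof -
  define E where "E n = (\<integral>\<^sup>+\<omega>. ennreal (uu (Y n \<omega>)) \<partial>M)" for n
  define D where "D = (\<integral>\<^sup>+\<omega>. ennreal (c * (ui \<omega> / 2) powr (1 + \<delta>)) \<partial>M)"
  have stepE: "E (Suc n) + D \<le> E n" for n
  proof -
    let ?f = "\<lambda>(y::real\<times>real) x. ennreal (uu y / 2 * indicator {..uu y / (4 * snd y)} x)"
    have fm: "case_prod ?f \<in> borel_measurable (borel \<Otimes>\<^sub>M borel)"
    proof -
      have [measurable]: "(\<lambda>p::(real\<times>real)\<times>real. uu (fst p)) \<in> borel_measurable (borel \<Otimes>\<^sub>M borel)"
        by (intro uu_meas) measurable
      have [measurable]: "(\<lambda>p::(real\<times>real)\<times>real. snd (fst p)) \<in> borel_measurable (borel \<Otimes>\<^sub>M borel)"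
      proof -
        have m1: "fst \<in> (borel \<Otimes>\<^sub>M borel) \<rightarrow>\<^sub>M (borel :: (real\<times>real) measure)"
          by (rule measurable_fst)
        have m2: "snd \<in> (borel :: (real\<times>real) measure) \<rightarrow>\<^sub>M (borel :: real measure)"
          using measurable_snd[of "borel :: real measure" "borel :: real measure"] by (simp add: borel_prod)
        from measurable_compose[OF m1 m2] show ?thesis by simp
      qed
      show ?thesis unfolding case_prod_beta indicator_def atMost_iff by measurable
    qed
    have K: "(\<integral>\<^sup>+\<omega>. ?f (Y n \<omega>) (X (Suc n) \<omega>) \<partial>M) = (\<integral>\<^sup>+\<omega>. (\<integral>\<^sup>+x. ?f (Y n \<omega>) x \<partial>PX) \<partial>M)"
      by (rule K_lemma[OF fm])
    have inner: "(\<integral>\<^sup>+x. ?f y x \<partial>PX) = ennreal (uu y / 2 * F (uu y / (4 * snd y)))" if v: "valid y" for y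
    proof -
      have u0: "0 \<le> uu y / 2" using v by (simp add: valid_iff)
      have "(\<integral>\<^sup>+x. ?f y x \<partial>PX) = (\<integral>\<^sup>+x. ennreal (uu y / 2) * indicator {..uu y / (4 * snd y)} x \<partial>PX)"
        using u0 by (intro nn_integral_cong) (auto simp: indicator_def)
      also have "\<dots> = ennreal (uu y / 2) * emeasure PX {..uu y / (4 * snd y)}"
        by (rule nn_integral_cmult_indicator) (simp add: sets_PX)
      also have "emeasure PX {..uu y / (4 * snd y)} = ennreal (F (uu y / (4 * snd y)))"
        using cdf_PX[of "uu y / (4 * snd y)"] by (simp add: RD.emeasure_eq_measure cdf_def)
      also have "ennreal (uu y / 2) * ennreal (F (uu y / (4 * snd y))) = ennreal (uu y / 2 * F (uu y / (4 * snd y)))"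
        using u0 cdf_PX[of "uu y / (4 * snd y)"] RD.cdf_nonneg[of "uu y / (4 * snd y)"]
        by (intro ennreal_mult[symmetric]) auto
      finally show ?thesis .
    qed
    have "E (Suc n) + D \<le> E (Suc n) + (\<integral>\<^sup>+\<omega>. ?f (Y n \<omega>) (X (Suc n) \<omega>) \<partial>M)"
    proof (rule add_left_mono)
      show "D \<le> (\<integral>\<^sup>+\<omega>. ?f (Y n \<omega>) (X (Suc n) \<omega>) \<partial>M)"
        unfolding K D_def
      proof (rule nn_integral_mono_AE)
        show "AE \<omega> in M. ennreal (c * (ui \<omega> / 2) powr (1 + \<delta>)) \<le> (\<integral>\<^sup>+x. ?f (Y n \<omega>) x \<partial>PX)"
          using AE_X01
        proof (rule AE_mp, intro AE_I2 impI)
          fix \<omega> assume g: "\<forall>n. 0 \<le> X (Suc n) \<omega> \<and> X (Suc n) \<omega> \<le> 1"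
          have v: "valid (Y n \<omega>)" by (rule good_props(1)[OF g])
          have "c * (ui \<omega> / 2) powr (1 + \<delta>) \<le> c * (uu (Y n \<omega>) / 2) powr (1 + \<delta>)"
            using ui_good(2)[OF g, of n] ui_good(3)[OF g] c0 d0 by (intro mult_left_mono powr_mono2) auto
          also have "\<dots> \<le> uu (Y n \<omega>) / 2 * F (uu (Y n \<omega>) / (4 * snd (Y n \<omega>)))"
            by (rule F_q_bound[OF v])
          finally show "ennreal (c * (ui \<omega> / 2) powr (1 + \<delta>)) \<le> (\<integral>\<^sup>+x. ?f (Y n \<omega>) x \<partial>PX)"
            by (subst inner[OF v]) (rule ennreal_leI)
        qed
      qed
    qed
    also have "\<dots> = (\<integral>\<^sup>+\<omega>. ennreal (uu (Y (Suc n) \<omega>)) + ?f (Y n \<omega>) (X (Suc n) \<omega>) \<partial>M)"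
      unfolding E_def by (rule nn_integral_add[symmetric]) (use fm in \<open>auto simp: case_prod_beta\<close>)
    also have "\<dots> \<le> E n"
      unfolding E_def
    proof (rule nn_integral_mono_AE)
      show "AE \<omega> in M. ennreal (uu (Y (Suc n) \<omega>)) + ?f (Y n \<omega>) (X (Suc n) \<omega>) \<le> ennreal (uu (Y n \<omega>))"
        using AE_X01
      proof (rule AE_mp, intro AE_I2 impI)
        fix \<omega> assume g: "\<forall>n. 0 \<le> X (Suc n) \<omega> \<and> X (Suc n) \<omega> \<le> 1"
        have v: "valid (Y n \<omega>)" by (rule good_props(1)[OF g])
        have v': "valid (Y (Suc n) \<omega>)" by (rule good_props(1)[OF g])
        have "uu (Y (Suc n) \<omega>) + uu (Y n \<omega>) / 2 * indicator {..uu (Y n \<omega>) / (4 * snd (Y n \<omega>))} (X (Suc n) \<omega>) \<le> uu (Y n \<omega>)"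
          unfolding Y_Suc using ushrink[OF v] g by auto
        moreover have "0 \<le> uu (Y (Suc n) \<omega>)" "0 \<le> uu (Y n \<omega>) / 2 * indicator {..uu (Y n \<omega>) / (4 * snd (Y n \<omega>))} (X (Suc n) \<omega>)"
          using v v' by (auto simp: valid_iff)
        ultimately show "ennreal (uu (Y (Suc n) \<omega>)) + ?f (Y n \<omega>) (X (Suc n) \<omega>) \<le> ennreal (uu (Y n \<omega>))"
          unfolding prod.case by (metis ennreal_leI ennreal_plus)
      qed
    qed
    finally show ?thesis .
  qed
  have E0: "E 0 = 1" by (simp add: E_def Y_0 uu_def emeasure_space_1)
  have ind: "E n + of_nat n * D \<le> 1" for n
  proof (induction n)
    case 0 then show ?case using E0 by simp
  next
    case (Suc n)
    have "E (Suc n) + of_nat (Suc n) * D = (E (Suc n) + D) + of_nat n * D"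
      by (simp add: algebra_simps)
    also have "\<dots> \<le> E n + of_nat n * D" using stepE[of n] by (rule add_right_mono)
    finally show ?case using Suc by simp
  qed
  have nD: "of_nat n * D \<le> 1" for n
  proof -
    have "of_nat n * D \<le> E n + of_nat n * D" by (rule add_increasing) auto
    then show ?thesis using ind[of n] by (rule order_trans)
  qed
  have "D = 0"
  proof (rule ccontr)
    assume "D \<noteq> 0"
    have "D \<le> 1" using nD[of 1] by simp
    then obtain d where d: "D = ennreal d" "0 \<le> d" by (cases D) (auto simp: top_unique)
    then have dpos: "0 < d" using \<open>D \<noteq> 0\<close> by auto
    obtain n :: nat where "1 / d < of_nat n" using reals_Archimedean2 by blast
    then have "1 < of_nat n * d" using dpos by (simp add: field_simps)
    moreover have "of_nat n * d \<le> 1"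
      using nD[of n] d by (simp add: ennreal_of_nat_eq_real_of_nat ennreal_mult[symmetric])
    ultimately show False by simp
  qed
  then have "AE \<omega> in M. ennreal (c * (ui \<omega> / 2) powr (1 + \<delta>)) = 0"
    unfolding D_def by (subst (asm) nn_integral_0_iff_AE) auto
  then show ?thesis
    using AE_X01
  proof (eventually_elim)
    case (elim \<omega>)
    have "0 \<le> ui \<omega>" by (rule ui_good(3)[OF elim(2)])
    moreover have "0 \<le> c * (ui \<omega> / 2) powr (1 + \<delta>)" using c0 by simp
    ultimately show "ui \<omega> = 0" using elim(1) c0 by simp
  qed
qed

definition W :: "'a \<Rightarrow> real" where "W \<omega> = lim (\<lambda>n. al (Y n \<omega>))"
definition Zl :: "'a \<Rightarrow> real" where "Zl \<omega> = lim (\<lambda>n. fst (Y n \<omega>))"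

lemma W_meas[measurable]: "W \<in> borel_measurable M"
  unfolding W_def by measurable
lemma Zl_meas[measurable]: "Zl \<in> borel_measurable M"
proof -
  have [measurable]: "(\<lambda>\<omega>. fst (Y n \<omega>)) \<in> borel_measurable M" for n
    using Y_meas[of n] unfolding borel_prod[symmetric] by measurable
  show ?thesis unfolding Zl_def by measurable
qed

definition good :: "'a \<Rightarrow> bool" where
  "good \<omega> \<longleftrightarrow> (\<forall>n. 0 \<le> X (Suc n) \<omega> \<and> X (Suc n) \<omega> \<le> 1) \<and> ui \<omega> = 0"

lemma AE_good: "AE \<omega> in M. good \<omega>"
  using AE_X01 ui_zero by eventually_elim (simp add: good_def)

lemma good_lim:
  assumes g: "good \<omega>"
  shows "(\<lambda>n. al (Y n \<omega>)) \<longlonglongrightarrow> W \<omega>" "(\<lambda>n. al (Y n \<omega>) + uu (Y n \<omega>)) \<longlonglongrightarrow> W \<omega>"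
    "(\<lambda>n. fst (Y n \<omega>)) \<longlonglongrightarrow> W \<omega> - 1/2" "Zl \<omega> = W \<omega> - 1/2"
proof -
  have g1: "\<forall>n. 0 \<le> X (Suc n) \<omega> \<and> X (Suc n) \<omega> \<le> 1" and g2: "ui \<omega> = 0" using g by (auto simp: good_def)
  have bd: "\<forall>i. al (Y i \<omega>) \<le> 1"
  proof
    fix i
    have "al (Y i \<omega>) + uu (Y i \<omega>) \<le> al (Y 0 \<omega>) + uu (Y 0 \<omega>)"
      using good_props(4)[OF g1] by (simp add: decseq_def)
    moreover have "0 \<le> uu (Y i \<omega>)" using good_props(1)[OF g1] by (simp add: valid_iff)
    ultimately show "al (Y i \<omega>) \<le> 1" by (simp add: Y_0 al_def uu_def)
  qed
  from incseq_convergent[OF good_props(2)[OF g1] bd] obtain L where L: "(\<lambda>n. al (Y n \<omega>)) \<longlonglongrightarrow> L" by blast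
  then have WL: "W \<omega> = L" unfolding W_def by (rule limI)
  show a: "(\<lambda>n. al (Y n \<omega>)) \<longlonglongrightarrow> W \<omega>" using L WL by simp
  have u: "(\<lambda>n. uu (Y n \<omega>)) \<longlonglongrightarrow> 0" using ui_good(1)[OF g1] g2 by simp
  show "(\<lambda>n. al (Y n \<omega>) + uu (Y n \<omega>)) \<longlonglongrightarrow> W \<omega>" using tendsto_add[OF a u] by simp
  have "(\<lambda>n. al (Y n \<omega>) + uu (Y n \<omega>) / 2 - 1/2) \<longlonglongrightarrow> W \<omega> + 0 / 2 - 1/2"
    by (intro tendsto_intros a u) simp
  then show f: "(\<lambda>n. fst (Y n \<omega>)) \<longlonglongrightarrow> W \<omega> - 1/2" by (simp add: fst_al_uu)
  show "Zl \<omega> = W \<omega> - 1/2" unfolding Zl_def using f by (rule limI)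
qed

lemma Phi_Y_meas[measurable]: "(\<lambda>\<omega>. Phi t (Y n \<omega>)) \<in> borel_measurable M"
  by (rule Phi_meas_gen) simp

lemma Phi0: "Phi t (0, 1) = emeasure beta {..t}"
  by (simp add: Phi_def al_def uu_def atMost_def)

lemma W_lt: "emeasure M {\<omega> \<in> space M. W \<omega> < t} \<le> emeasure beta {..t}"
proof -
  have "emeasure M {\<omega> \<in> space M. W \<omega> < t} = (\<integral>\<^sup>+\<omega>. indicator {\<omega> \<in> space M. W \<omega> < t} \<omega> \<partial>M)"
    by (rule nn_integral_indicator[symmetric]) measurable
  also have "\<dots> \<le> (\<integral>\<^sup>+\<omega>. liminf (\<lambda>n. Phi t (Y n \<omega>)) \<partial>M)"
  proof (rule nn_integral_mono_AE)
    show "AE \<omega> in M. indicator {\<omega> \<in> space M. W \<omega> < t} \<omega> \<le> liminf (\<lambda>n. Phi t (Y n \<omega>))"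
      using AE_good
    proof (rule AE_mp, intro AE_I2 impI)
      fix \<omega> assume \<omega>: "\<omega> \<in> space M" and g: "good \<omega>"
      show "indicator {\<omega> \<in> space M. W \<omega> < t} \<omega> \<le> liminf (\<lambda>n. Phi t (Y n \<omega>))"
      proof (cases "W \<omega> < t")
        case True
        have g1: "\<forall>n. 0 \<le> X (Suc n) \<omega> \<and> X (Suc n) \<omega> \<le> 1" using g by (simp add: good_def)
        have "eventually (\<lambda>n. al (Y n \<omega>) + uu (Y n \<omega>) < t) sequentially"
          using order_tendstoD(2)[OF good_lim(2)[OF g] True] .
        then have "eventually (\<lambda>n. Phi t (Y n \<omega>) = 1) sequentially"
          by eventually_elim (intro Phi_one good_props(1)[OF g1], simp)
        then have "(\<lambda>n. Phi t (Y n \<omega>)) \<longlonglongrightarrow> 1" by (rule tendsto_eventually)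
        then have "liminf (\<lambda>n. Phi t (Y n \<omega>)) = 1" by (intro lim_imp_Liminf) auto
        then show ?thesis by (simp add: indicator_def)
      qed (simp add: indicator_def)
    qed
  qed
  also have "\<dots> \<le> liminf (\<lambda>n. \<integral>\<^sup>+\<omega>. Phi t (Y n \<omega>) \<partial>M)"
    by (rule nn_integral_liminf) simp
  also have "\<dots> = emeasure beta {..t}"
    by (simp add: martingale Phi0 Liminf_const)
  finally show ?thesis .
qed

lemma W_gt: "emeasure M {\<omega> \<in> space M. t < W \<omega>} \<le> 1 - emeasure beta {..t}"
proof -
  have int1: "(\<integral>\<^sup>+\<omega>. 1 - Phi t (Y n \<omega>) \<partial>M) = 1 - emeasure beta {..t}" for n
  proof -
    have "(\<integral>\<^sup>+\<omega>. 1 - Phi t (Y n \<omega>) \<partial>M) = (\<integral>\<^sup>+\<omega>. 1 \<partial>M) - (\<integral>\<^sup>+\<omega>. Phi t (Y n \<omega>) \<partial>M)"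
      by (rule nn_integral_diff) (auto simp: martingale Phi0 Phi_le1 B.emeasure_eq_measure)
    then show ?thesis by (simp add: martingale Phi0 emeasure_space_1)
  qed
  have "emeasure M {\<omega> \<in> space M. t < W \<omega>} = (\<integral>\<^sup>+\<omega>. indicator {\<omega> \<in> space M. t < W \<omega>} \<omega> \<partial>M)"
    by (rule nn_integral_indicator[symmetric]) measurable
  also have "\<dots> \<le> (\<integral>\<^sup>+\<omega>. liminf (\<lambda>n. 1 - Phi t (Y n \<omega>)) \<partial>M)"
  proof (rule nn_integral_mono_AE)
    show "AE \<omega> in M. indicator {\<omega> \<in> space M. t < W \<omega>} \<omega> \<le> liminf (\<lambda>n. 1 - Phi t (Y n \<omega>))"
      using AE_good
    proof (rule AE_mp, intro AE_I2 impI)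
      fix \<omega> assume \<omega>: "\<omega> \<in> space M" and g: "good \<omega>"
      show "indicator {\<omega> \<in> space M. t < W \<omega>} \<omega> \<le> liminf (\<lambda>n. 1 - Phi t (Y n \<omega>))"
      proof (cases "t < W \<omega>")
        case True
        have g1: "\<forall>n. 0 \<le> X (Suc n) \<omega> \<and> X (Suc n) \<omega> \<le> 1" using g by (simp add: good_def)
        have "eventually (\<lambda>n. t < al (Y n \<omega>)) sequentially"
          using order_tendstoD(1)[OF good_lim(1)[OF g] True] .
        then have "eventually (\<lambda>n. 1 - Phi t (Y n \<omega>) = 1) sequentially"
          by eventually_elim (simp add: Phi_zero good_props(1)[OF g1])
        then have "(\<lambda>n. 1 - Phi t (Y n \<omega>)) \<longlonglongrightarrow> 1" by (rule tendsto_eventually)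
        then have "liminf (\<lambda>n. 1 - Phi t (Y n \<omega>)) = 1" by (intro lim_imp_Liminf) auto
        then show ?thesis by (simp add: indicator_def)
      qed (simp add: indicator_def)
    qed
  qed
  also have "\<dots> \<le> liminf (\<lambda>n. \<integral>\<^sup>+\<omega>. 1 - Phi t (Y n \<omega>) \<partial>M)"
    by (rule nn_integral_liminf) simp
  also have "\<dots> = 1 - emeasure beta {..t}"
    by (simp add: int1 Liminf_const)
  finally show ?thesis .
qed

lemma W_cdf: "measure M {\<omega> \<in> space M. W \<omega> \<le> t} = measure beta {..t}"
proof (rule antisym)
  have lt: "measure M {\<omega> \<in> space M. W \<omega> < s} \<le> measure beta {..s}" for s
    using W_lt[of s] by (simp add: emeasure_eq_measure B.emeasure_eq_measure)
  have dec: "(\<lambda>n. measure beta {..t + 1 / Suc n}) \<longlonglongrightarrow> measure beta (\<Inter>n. {..t + 1 / Suc n})"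
    by (rule B.finite_Lim_measure_decseq)
       (auto simp: sets_beta decseq_def intro!: divide_left_mono)
  have "(\<Inter>n. {..t + 1 / Suc n}) = {..t}"
  proof (intro set_eqI iffI)
    fix x assume "x \<in> (\<Inter>n. {..t + 1 / Suc n})"
    then have "\<forall>n. x \<le> t + 1 / Suc n" by auto
    moreover have "(\<lambda>n. t + 1 / real (Suc n)) \<longlonglongrightarrow> t + 0"
      by (intro tendsto_intros LIMSEQ_Suc[OF lim_inverse_n'])
    ultimately show "x \<in> {..t}" by (auto intro: LIMSEQ_le_const)
  next
    fix x assume "x \<in> {..t}"
    moreover have "\<And>n::nat. 0 \<le> 1 / real (Suc n)" by simp
    ultimately show "x \<in> (\<Inter>n. {..t + 1 / Suc n})" by (auto intro: add_increasing2)
  qed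
  with dec have dec': "(\<lambda>n. measure beta {..t + 1 / Suc n}) \<longlonglongrightarrow> measure beta {..t}" by simp
  show "measure M {\<omega> \<in> space M. W \<omega> \<le> t} \<le> measure beta {..t}"
  proof (rule LIMSEQ_le_const[OF dec'], intro exI allI impI)
    fix n :: nat
    have pos: "0 < 1 / real (Suc n)" by simp
    have sub: "{\<omega> \<in> space M. W \<omega> \<le> t} \<subseteq> {\<omega> \<in> space M. W \<omega> < t + 1 / Suc n}"
    proof
      fix x assume "x \<in> {\<omega> \<in> space M. W \<omega> \<le> t}"
      then have "x \<in> space M" "W x \<le> t" by auto
      moreover have "W x < t + 1 / real (Suc n)" using \<open>W x \<le> t\<close> pos by linarith
      ultimately show "x \<in> {\<omega> \<in> space M. W \<omega> < t + 1 / Suc n}" by simp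
    qed
    have "measure M {\<omega> \<in> space M. W \<omega> \<le> t} \<le> measure M {\<omega> \<in> space M. W \<omega> < t + 1 / Suc n}"
      by (rule finite_measure_mono[OF sub]) measurable
    also have "\<dots> \<le> measure beta {..t + 1 / Suc n}" by (rule lt)
    finally show "measure M {\<omega> \<in> space M. W \<omega> \<le> t} \<le> measure beta {..t + 1 / Suc n}" .
  qed
  have "measure M {\<omega> \<in> space M. t < W \<omega>} \<le> 1 - measure beta {..t}"
  proof -
    have "ennreal (measure M {\<omega> \<in> space M. t < W \<omega>}) \<le> 1 - ennreal (measure beta {..t})"
      using W_gt[of t] by (simp add: emeasure_eq_measure B.emeasure_eq_measure)
    also have "\<dots> = ennreal (1 - measure beta {..t})" by (simp add: ennreal_1[symmetric] ennreal_minus del: ennreal_1)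
    finally have "measure M {\<omega> \<in> space M. t < W \<omega>} \<le> 1 - measure beta {..t} \<or>
      measure M {\<omega> \<in> space M. t < W \<omega>} \<le> 0 \<and> 1 \<le> measure beta {..t}"
      by (simp add: ennreal_le_iff2)
    then show ?thesis using B.prob_le_1[of "{..t}"] by auto
  qed
  moreover have "measure M {\<omega> \<in> space M. W \<omega> \<le> t} = 1 - measure M {\<omega> \<in> space M. t < W \<omega>}"
  proof -
    have "measure M {\<omega> \<in> space M. W \<omega> \<le> t} + measure M {\<omega> \<in> space M. t < W \<omega>} = measure M (space M)"
      by (subst finite_measure_Union[symmetric]) (auto intro!: arg_cong[where f="measure M"])
    then show ?thesis using prob_space by simp
  qed
  ultimately show "measure beta {..t} \<le> measure M {\<omega> \<in> space M. W \<omega> \<le> t}" by simp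
qed

lemma Zl_cdf: "measure M {\<omega> \<in> space M. Zl \<omega> \<le> t} = measure beta {..t + 1/2}"
proof -
  have "measure M {\<omega> \<in> space M. Zl \<omega> \<le> t} = measure M {\<omega> \<in> space M. W \<omega> \<le> t + 1/2}"
  proof (rule measure_eq_AE)
    show "AE \<omega> in M. (\<omega> \<in> {\<omega> \<in> space M. Zl \<omega> \<le> t}) = (\<omega> \<in> {\<omega> \<in> space M. W \<omega> \<le> t + 1/2})"
      using AE_good by eventually_elim (auto simp: good_lim(4))
  qed measurable
  then show ?thesis by (simp add: W_cdf)
qed

lemma f_dens_meas[measurable]: "(\<lambda>x. f_dens \<delta> c x) \<in> borel_measurable borel"
  unfolding f_dens_def by measurable

lemma dens_shift:
  assumes A: "A \<in> sets borel"
  shows "emeasure (density lborel (\<lambda>x. ennreal (f_dens \<delta> c x))) A = emeasure beta ((\<lambda>x. x + 1/2) ` A)"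
proof -
  have fg: "f_dens \<delta> c x = gB (1/2 + x)" for x by (simp add: gB_def)
  let ?A' = "(\<lambda>x. x + 1/2) ` A"
  have A'i: "indicator ?A' (1/2 + x) = (indicator A x :: ennreal)" for x
    by (auto simp: indicator_def image_iff add.commute)
  have A': "?A' \<in> sets borel"
  proof -
    have "?A' = (\<lambda>x. x - 1/2) -` A" by (force simp: image_iff)
    moreover have m: "(\<lambda>x::real. x - 1/2) \<in> borel_measurable borel" by measurable
    ultimately show ?thesis using measurable_sets_borel[OF m A] by simp
  qed
  have "emeasure beta ?A' = (\<integral>\<^sup>+w. ennreal (gB w) * indicator ?A' w \<partial>lborel)"
    unfolding beta_def using A' by (simp add: emeasure_density)
  also have "\<dots> = (\<integral>\<^sup>+x. ennreal (gB (1/2 + x)) * indicator ?A' (1/2 + x) \<partial>lborel)"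
    using nn_integral_real_affine[of "\<lambda>w. ennreal (gB w) * indicator ?A' w" 1 "1/2"] A' by simp
  also have "\<dots> = (\<integral>\<^sup>+x. ennreal (f_dens \<delta> c x) * indicator A x \<partial>lborel)"
    by (simp add: fg A'i)
  also have "\<dots> = emeasure (density lborel (\<lambda>x. ennreal (f_dens \<delta> c x))) A"
    using A by (subst emeasure_density) auto
  finally show ?thesis by simp
qed

theorem main:
  "\<exists>Z. Z \<in> borel_measurable M
     \<and> (AE \<omega> in M. (\<lambda>n. fst (Zr (\<lambda>k. X k \<omega>) n)) \<longlonglongrightarrow> Z \<omega>)
     \<and> distributed M lborel Z (\<lambda>x. ennreal (f_dens \<delta> c x))"
proof (intro exI conjI)
  show "Zl \<in> borel_measurable M" by simp
  show "AE \<omega> in M. (\<lambda>n. fst (Zr (\<lambda>k. X k \<omega>) n)) \<longlonglongrightarrow> Zl \<omega>"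
    using AE_good by eventually_elim (use good_lim in \<open>auto simp: Y_def\<close>)
  let ?D = "density lborel (\<lambda>x. ennreal (f_dens \<delta> c x))"
  have Zl_lborel: "Zl \<in> M \<rightarrow>\<^sub>M lborel" by simp
  have rd1: "real_distribution (distr M lborel Zl)"
    unfolding real_distribution_def real_distribution_axioms_def
    by (auto intro!: prob_space_distr)
  have tot: "emeasure ?D UNIV = 1"
  proof -
    have "(\<lambda>x. x + 1/2) ` (UNIV :: real set) = UNIV"
    proof (intro set_eqI iffI)
      fix y :: real
      show "y \<in> (\<lambda>x. x + 1/2) ` UNIV" by (intro image_eqI[where x="y - 1/2"]) auto
    qed auto
    then show ?thesis using dens_shift[of UNIV] B.emeasure_space_1 by simp
  qed
  have rd2: "real_distribution ?D"
    unfolding real_distribution_def real_distribution_axioms_def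
    using tot by (auto intro!: prob_spaceI)
  have "distr M lborel Zl = ?D"
  proof (rule cdf_unique[OF rd1 rd2], rule ext)
    fix t
    have "cdf (distr M lborel Zl) t = measure M {\<omega> \<in> space M. Zl \<omega> \<le> t}"
      by (simp add: cdf_def measure_distr vimage_def Int_def conj_commute)
    also have "\<dots> = measure beta {..t + 1/2}" by (rule Zl_cdf)
    also have "\<dots> = cdf ?D t"
    proof -
      have "(\<lambda>x. x + 1/2) ` {..t} = {..t + 1/2}"
      proof (intro set_eqI iffI)
        fix y assume "y \<in> {..t + 1/2}"
        then show "y \<in> (\<lambda>x. x + 1/2) ` {..t}" by (intro image_eqI[where x="y - 1/2"]) auto
      qed auto
      then have "emeasure ?D {..t} = emeasure beta {..t + 1/2}"
        using dens_shift[of "{..t}"] by simp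
      then show ?thesis by (simp add: cdf_def measure_def)
    qed
    finally show "cdf (distr M lborel Zl) t = cdf ?D t" .
  qed
  then show "distributed M lborel Zl (\<lambda>x. ennreal (f_dens \<delta> c x))"
    unfolding distributed_def by simp
qed

end

theorem theorem2:
  fixes M :: "'a measure" and X :: "nat \<Rightarrow> 'a \<Rightarrow> real" and c \<delta> :: real
  assumes "prob_space M"
    and "0 < c" "c < 1" "0 < \<delta>"
    and "\<And>n. n \<ge> 1 \<Longrightarrow> X n \<in> borel_measurable M"
    and "prob_space.indep_vars M (\<lambda>_. borel) X {1..}"
    and "\<And>n t. n \<ge> 1 \<Longrightarrow> measure M {\<omega> \<in> space M. X n \<omega> \<le> t} = Fdist c \<delta> t"
  shows "\<exists>Z. Z \<in> borel_measurable M
           \<and> (AE \<omega> in M. (\<lambda>n. fst (Zr (\<lambda>k. X k \<omega>) n)) \<longlonglongrightarrow> Z \<omega>)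
           \<and> distributed M lborel Z (\<lambda>x. ennreal (f_dens \<delta> c x))"
  proof -
  have "setting M c \<delta> X"
    unfolding setting_def setting_axioms_def params_def using assms by auto
  then interpret S: setting M c \<delta> X .
  show ?thesis by (rule S.main)
qed

end
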